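(* The functor $\mathrm{Skew}$ from curved associative algebras to curved Lie algebras, sending $(A,\mu_A,d_A,\vartheta)$ to $(A,[x,y]=\mu_A(x,y)-(-1)^{|x||y|}\mu_A(y,x),d_A,\vartheta)$, has a left adjoint $\mathfrak{U}$ (the curved universal enveloping algebra).
   Context: Ground field $\mathbb{K}$ of characteristic $0$, graded modules with Koszul signs, homological grading. A curved Lie algebra $(\mathfrak{g},[-,-],d_\mathfrak{g},\vartheta)$ is a graded Lie algebra with a degree $-1$ derivation $d_\mathfrak{g}$ of the bracket and an element $\vartheta\in\mathfrak{g}_{-2}$ with $d_\mathfrak{g}^2=[\vartheta,-]$ and $d_\mathfrak{g}(\vartheta)=0$; morphisms are graded Lie algebra maps commuting with pre-differentials and preserving curvatures. A curved associative algebra $(A,\mu_A,d_A,\vartheta)$ is a non-unital graded associative algebra with a degree $-1$ derivation $d_A$ and $\vartheta\in A_{-2}$ with $d_A^2=\mu_A(\vartheta,-)-\mu_A(-,\vartheta)$ and $d_A(\vartheta)=0$; morphisms are algebra maps commuting with pre-differentials and preserving curvatures. *)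

theory Defs
  imports "HOL-Algebra.Module"
begin

definition Kring :: "('k::field_char_0) ring" where
  "Kring = \<lparr>carrier = UNIV, mult = (*), one = 1, zero = 0, add = (+)\<rparr>"

text \<open>A (pre-)structure: a K-module (carrier set, addition, scalar multiplication),
  a binary product (the field mult: the associative product, resp. the Lie bracket),
  homogeneous components hom n (homological Z-grading), a pre-differential pd
  and a curvature curv. The fields one of the ring record is unused.\<close>

record ('k, 'a) cstruct = "('k, 'a) module" +
  hom :: "int \<Rightarrow> 'a set"
  pd :: "'a \<Rightarrow> 'a"
  curv :: "'a"

definition ksign :: "int \<Rightarrow> 'k::field_char_0" where
  "ksign n = (if even n then 1 else - 1)"

definition graded_module :: "('k::field_char_0, 'a) cstruct \<Rightarrow> bool" where
  "graded_module M \<longleftrightarrow>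
     module Kring M \<and>
     (\<forall>n. hom M n \<subseteq> carrier M \<and> \<zero>\<^bsub>M\<^esub> \<in> hom M n \<and>
          (\<forall>x\<in>hom M n. \<forall>y\<in>hom M n. x \<oplus>\<^bsub>M\<^esub> y \<in> hom M n) \<and>
          (\<forall>c. \<forall>x\<in>hom M n. smult M c x \<in> hom M n)) \<and>
     (\<forall>x\<in>carrier M. \<exists>!c. finite {n. c n \<noteq> \<zero>\<^bsub>M\<^esub>} \<and> (\<forall>n. c n \<in> hom M n) \<and>
          x = finsum M c {n. c n \<noteq> \<zero>\<^bsub>M\<^esub>})"

definition bilinear_product :: "('k::field_char_0, 'a) cstruct \<Rightarrow> bool" where
  "bilinear_product M \<longleftrightarrow>
     (\<forall>x\<in>carrier M. \<forall>y\<in>carrier M. x \<otimes>\<^bsub>M\<^esub> y \<in> carrier M) \<and>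
     (\<forall>x\<in>carrier M. \<forall>y\<in>carrier M. \<forall>z\<in>carrier M.
        (x \<oplus>\<^bsub>M\<^esub> y) \<otimes>\<^bsub>M\<^esub> z = (x \<otimes>\<^bsub>M\<^esub> z) \<oplus>\<^bsub>M\<^esub> (y \<otimes>\<^bsub>M\<^esub> z) \<and>
        z \<otimes>\<^bsub>M\<^esub> (x \<oplus>\<^bsub>M\<^esub> y) = (z \<otimes>\<^bsub>M\<^esub> x) \<oplus>\<^bsub>M\<^esub> (z \<otimes>\<^bsub>M\<^esub> y)) \<and>
     (\<forall>c. \<forall>x\<in>carrier M. \<forall>y\<in>carrier M.
        smult M c x \<otimes>\<^bsub>M\<^esub> y = smult M c (x \<otimes>\<^bsub>M\<^esub> y) \<and>
        x \<otimes>\<^bsub>M\<^esub> smult M c y = smult M c (x \<otimes>\<^bsub>M\<^esub> y)) \<and>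
     (\<forall>p q. \<forall>x\<in>hom M p. \<forall>y\<in>hom M q. x \<otimes>\<^bsub>M\<^esub> y \<in> hom M (p + q))"

definition predifferential :: "('k::field_char_0, 'a) cstruct \<Rightarrow> bool" where
  "predifferential M \<longleftrightarrow>
     (\<forall>x\<in>carrier M. pd M x \<in> carrier M) \<and>
     (\<forall>x\<in>carrier M. \<forall>y\<in>carrier M. pd M (x \<oplus>\<^bsub>M\<^esub> y) = pd M x \<oplus>\<^bsub>M\<^esub> pd M y) \<and>
     (\<forall>c. \<forall>x\<in>carrier M. pd M (smult M c x) = smult M c (pd M x)) \<and>
     (\<forall>n. \<forall>x\<in>hom M n. pd M x \<in> hom M (n - 1))"

definition curved_lie :: "('k::field_char_0, 'a) cstruct \<Rightarrow> bool" where
  "curved_lie L \<longleftrightarrow>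
     graded_module L \<and> bilinear_product L \<and> predifferential L \<and>
     \<comment> \<open>graded antisymmetry\<close>
     (\<forall>p q. \<forall>x\<in>hom L p. \<forall>y\<in>hom L q.
        x \<otimes>\<^bsub>L\<^esub> y = \<ominus>\<^bsub>L\<^esub> smult L (ksign (p * q)) (y \<otimes>\<^bsub>L\<^esub> x)) \<and>
     \<comment> \<open>graded Jacobi identity (Leibniz form)\<close>
     (\<forall>p q. \<forall>x\<in>hom L p. \<forall>y\<in>hom L q. \<forall>z\<in>carrier L.
        x \<otimes>\<^bsub>L\<^esub> (y \<otimes>\<^bsub>L\<^esub> z) =
          ((x \<otimes>\<^bsub>L\<^esub> y) \<otimes>\<^bsub>L\<^esub> z) \<oplus>\<^bsub>L\<^esub> smult L (ksign (p * q)) (y \<otimes>\<^bsub>L\<^esub> (x \<otimes>\<^bsub>L\<^esub> z))) \<and>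
     \<comment> \<open>pd is a derivation of the bracket\<close>
     (\<forall>p. \<forall>x\<in>hom L p. \<forall>y\<in>carrier L.
        pd L (x \<otimes>\<^bsub>L\<^esub> y) = (pd L x \<otimes>\<^bsub>L\<^esub> y) \<oplus>\<^bsub>L\<^esub> smult L (ksign p) (x \<otimes>\<^bsub>L\<^esub> pd L y)) \<and>
     curv L \<in> hom L (-2) \<and>
     (\<forall>x\<in>carrier L. pd L (pd L x) = curv L \<otimes>\<^bsub>L\<^esub> x) \<and>
     pd L (curv L) = \<zero>\<^bsub>L\<^esub>"

definition curved_assoc :: "('k::field_char_0, 'a) cstruct \<Rightarrow> bool" where
  "curved_assoc A \<longleftrightarrow>
     graded_module A \<and> bilinear_product A \<and> predifferential A \<and>
     (\<forall>x\<in>carrier A. \<forall>y\<in>carrier A. \<forall>z\<in>carrier A.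
        (x \<otimes>\<^bsub>A\<^esub> y) \<otimes>\<^bsub>A\<^esub> z = x \<otimes>\<^bsub>A\<^esub> (y \<otimes>\<^bsub>A\<^esub> z)) \<and>
     (\<forall>p. \<forall>x\<in>hom A p. \<forall>y\<in>carrier A.
        pd A (x \<otimes>\<^bsub>A\<^esub> y) = (pd A x \<otimes>\<^bsub>A\<^esub> y) \<oplus>\<^bsub>A\<^esub> smult A (ksign p) (x \<otimes>\<^bsub>A\<^esub> pd A y)) \<and>
     curv A \<in> hom A (-2) \<and>
     (\<forall>x\<in>carrier A. pd A (pd A x) = (curv A \<otimes>\<^bsub>A\<^esub> x) \<ominus>\<^bsub>A\<^esub> (x \<otimes>\<^bsub>A\<^esub> curv A)) \<and>
     pd A (curv A) = \<zero>\<^bsub>A\<^esub>"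

definition cmor :: "('k::field_char_0, 'a) cstruct \<Rightarrow> ('k, 'b) cstruct \<Rightarrow> ('a \<Rightarrow> 'b) \<Rightarrow> bool" where
  "cmor M N f \<longleftrightarrow>
     (\<forall>x\<in>carrier M. f x \<in> carrier N) \<and>
     (\<forall>x\<in>carrier M. \<forall>y\<in>carrier M. f (x \<oplus>\<^bsub>M\<^esub> y) = f x \<oplus>\<^bsub>N\<^esub> f y) \<and>
     (\<forall>c. \<forall>x\<in>carrier M. f (smult M c x) = smult N c (f x)) \<and>
     (\<forall>n. \<forall>x\<in>hom M n. f x \<in> hom N n) \<and>
     (\<forall>x\<in>carrier M. \<forall>y\<in>carrier M. f (x \<otimes>\<^bsub>M\<^esub> y) = f x \<otimes>\<^bsub>N\<^esub> f y) \<and>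
     (\<forall>x\<in>carrier M. f (pd M x) = pd N (f x)) \<and>
     f (curv M) = curv N"

definition comps :: "('k::field_char_0, 'a) cstruct \<Rightarrow> 'a \<Rightarrow> int \<Rightarrow> 'a" where
  "comps M x = (THE c. finite {n. c n \<noteq> \<zero>\<^bsub>M\<^esub>} \<and> (\<forall>n. c n \<in> hom M n) \<and>
                        x = finsum M c {n. c n \<noteq> \<zero>\<^bsub>M\<^esub>})"

definition degs :: "('k::field_char_0, 'a) cstruct \<Rightarrow> 'a \<Rightarrow> int set" where
  "degs M x = {n. comps M x n \<noteq> \<zero>\<^bsub>M\<^esub>}"

text \<open>[x,y] = x y - (-1)^(|x||y|) y x on homogeneous elements, extended bilinearly.\<close>
definition skew_bracket :: "('k::field_char_0, 'a) cstruct \<Rightarrow> 'a \<Rightarrow> 'a \<Rightarrow> 'a" where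
  "skew_bracket A x y =
     (x \<otimes>\<^bsub>A\<^esub> y) \<ominus>\<^bsub>A\<^esub>
       finsum A (\<lambda>p. finsum A (\<lambda>q. smult A (ksign (p * q)) (comps A y q \<otimes>\<^bsub>A\<^esub> comps A x p))
                             (degs A y)) (degs A x)"

definition Skew :: "('k::field_char_0, 'a) cstruct \<Rightarrow> ('k, 'a) cstruct" where
  "Skew A = A\<lparr>mult := skew_bracket A\<rparr>"

text \<open>(U, eta) is a universal arrow from the curved Lie algebra g to the functor Skew,
  tested against all curved associative algebras whose carrier lives in type 'b.\<close>
definition universal_arrow ::
  "('k::field_char_0, 'a) cstruct \<Rightarrow> ('k, 'u) cstruct \<Rightarrow> ('a \<Rightarrow> 'u) \<Rightarrow> 'b itself \<Rightarrow> bool" where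
  "universal_arrow g U eta (_ :: 'b itself) \<longleftrightarrow>
     curved_assoc U \<and> cmor g (Skew U) eta \<and>
     (\<forall>(A :: ('k, 'b) cstruct) f. curved_assoc A \<and> cmor g (Skew A) f \<longrightarrow>
        (\<exists>h. cmor U A h \<and> (\<forall>x\<in>carrier g. h (eta x) = f x) \<and>
             (\<forall>h'. cmor U A h' \<and> (\<forall>x\<in>carrier g. h' (eta x) = f x) \<longrightarrow>
                   (\<forall>y\<in>carrier U. h' y = h y))))"

text \<open>The curved universal enveloping algebra: a universal arrow chosen with carrier in the
  fixed type ('k * 'a list) list (large enough to hold a copy of it).\<close>
type_synonym ('k, 'a) uea_carrier = "('k \<times> 'a list) list"

definition cUEA ::
  "('k::field_char_0, 'a) cstruct \<Rightarrow> ('k, ('k, 'a) uea_carrier) cstruct \<times> ('a \<Rightarrow> ('k, 'a) uea_carrier)" where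
  "cUEA g = (SOME (U, eta). universal_arrow g U eta TYPE(('k, 'a) uea_carrier))"

end

theory Submission
  imports Defs
begin


lemma Kring_simps[simp]:
  "carrier Kring = UNIV" "add Kring a b = a + b" "mult Kring a b = a * b"
  "zero Kring = 0" "one Kring = 1"
  by (simp_all add: Kring_def)

lemma cring_Kring: "cring (Kring :: ('k::field_char_0) ring)"
proof (rule cringI)
  show "abelian_group (Kring :: 'k ring)"
  proof (rule abelian_groupI)
    fix x :: 'k
    show "\<exists>y\<in>carrier Kring. y \<oplus>\<^bsub>Kring\<^esub> x = \<zero>\<^bsub>Kring\<^esub>"
      by (rule bexI[of _ "- x"]) simp_all
  qed (simp_all add: algebra_simps)
  show "comm_monoid (Kring :: 'k ring)"
    by (rule comm_monoidI) (auto simp: algebra_simps)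
  show "\<And>x y z. x \<in> carrier (Kring::'k ring) \<Longrightarrow> y \<in> carrier Kring \<Longrightarrow> z \<in> carrier Kring \<Longrightarrow>
      (x \<oplus>\<^bsub>Kring\<^esub> y) \<otimes>\<^bsub>Kring\<^esub> z = x \<otimes>\<^bsub>Kring\<^esub> z \<oplus>\<^bsub>Kring\<^esub> y \<otimes>\<^bsub>Kring\<^esub> z"
    by (simp add: algebra_simps)
qed

lemma gm_module: "graded_module M \<Longrightarrow> module Kring M"
  by (simp add: graded_module_def)

lemma gm_ag: "graded_module M \<Longrightarrow> abelian_group M"
  using gm_module module.axioms(2) by blast

lemma ag_idem_zero:
  assumes "abelian_group N" "x \<in> carrier N" "x \<oplus>\<^bsub>N\<^esub> x = x"
  shows "x = \<zero>\<^bsub>N\<^esub>"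
proof -
  interpret abelian_group N by fact
  have "x = (\<ominus>\<^bsub>N\<^esub> x \<oplus>\<^bsub>N\<^esub> x) \<oplus>\<^bsub>N\<^esub> x" using assms(2) by (simp add: l_neg)
  also have "\<dots> = \<ominus>\<^bsub>N\<^esub> x \<oplus>\<^bsub>N\<^esub> (x \<oplus>\<^bsub>N\<^esub> x)" using assms by (simp add: a_assoc)
  also have "\<dots> = \<zero>\<^bsub>N\<^esub>" using assms by (simp add: l_neg)
  finally show ?thesis .
qed

lemma finsum_hom:
  assumes M: "abelian_monoid M" and N: "abelian_monoid N"
    and phi: "\<And>x. x \<in> carrier M \<Longrightarrow> phi x \<in> carrier N"
    and padd: "\<And>x y. x \<in> carrier M \<Longrightarrow> y \<in> carrier M \<Longrightarrow> phi (x \<oplus>\<^bsub>M\<^esub> y) = phi x \<oplus>\<^bsub>N\<^esub> phi y"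
    and pz: "phi \<zero>\<^bsub>M\<^esub> = \<zero>\<^bsub>N\<^esub>"
    and F: "finite F" and c: "c \<in> F \<rightarrow> carrier M"
  shows "phi (finsum M c F) = finsum N (\<lambda>n. phi (c n)) F"
  using F c
proof (induction F rule: finite_induct)
  case empty
  interpret M: abelian_monoid M by fact
  interpret N: abelian_monoid N by fact
  show ?case using pz by simp
next
  case (insert a F)
  have cF: "c \<in> F \<rightarrow> carrier M" and ca: "c a \<in> carrier M" using insert by auto
  have "finsum M c (insert a F) = c a \<oplus>\<^bsub>M\<^esub> finsum M c F"
    using abelian_monoid.finsum_insert[OF M insert(1,2) cF ca] .
  moreover have "finsum N (\<lambda>n. phi (c n)) (insert a F) = phi (c a) \<oplus>\<^bsub>N\<^esub> finsum N (\<lambda>n. phi (c n)) F"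
    by (rule abelian_monoid.finsum_insert[OF N insert(1,2)]) (use cF ca phi in auto)
  ultimately show ?case using insert padd ca abelian_monoid.finsum_closed[OF M cF] by simp
qed

lemma finsum_superset:
  assumes M: "abelian_monoid M" and "finite B" "A \<subseteq> B" "\<And>i. i \<in> B - A \<Longrightarrow> h i = \<zero>\<^bsub>M\<^esub>"
    "h \<in> B \<rightarrow> carrier M"
  shows "finsum M h A = finsum M h B"
proof -
  interpret abelian_monoid M by fact
  show ?thesis using add.finprod_mono_neutral_cong_left[of B A h h] assms by simp
qed

lemma comps_props:
  assumes "graded_module A" "y \<in> carrier A"
  shows "finite {n. comps A y n \<noteq> \<zero>\<^bsub>A\<^esub>}" "\<And>n. comps A y n \<in> hom A n"
    "y = finsum A (comps A y) {n. comps A y n \<noteq> \<zero>\<^bsub>A\<^esub>}"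
proof -
  from assms have ex: "\<exists>!c. finite {n. c n \<noteq> \<zero>\<^bsub>A\<^esub>} \<and> (\<forall>n. c n \<in> hom A n) \<and>
          y = finsum A c {n. c n \<noteq> \<zero>\<^bsub>A\<^esub>}" by (simp add: graded_module_def)
  have "finite {n. comps A y n \<noteq> \<zero>\<^bsub>A\<^esub>} \<and> (\<forall>n. comps A y n \<in> hom A n) \<and>
          y = finsum A (comps A y) {n. comps A y n \<noteq> \<zero>\<^bsub>A\<^esub>}"
    unfolding comps_def by (rule theI'[OF ex])
  then show "finite {n. comps A y n \<noteq> \<zero>\<^bsub>A\<^esub>}" "\<And>n. comps A y n \<in> hom A n"
    "y = finsum A (comps A y) {n. comps A y n \<noteq> \<zero>\<^bsub>A\<^esub>}" by auto
qed

lemma comps_unique: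
  assumes "graded_module A" "finite {n. c n \<noteq> \<zero>\<^bsub>A\<^esub>}" "\<And>n. c n \<in> hom A n"
    "y = finsum A c {n. c n \<noteq> \<zero>\<^bsub>A\<^esub>}"
  shows "comps A y = c"
proof -
  have ag: "abelian_group A" using gm_ag[OF assms(1)] .
  have hc: "\<And>n. hom A n \<subseteq> carrier A" using assms(1) by (simp add: graded_module_def)
  interpret abelian_group A by fact
  have yc: "y \<in> carrier A" unfolding assms(4) by (rule finsum_closed) (use assms(3) hc in blast)
  from assms(1) yc have ex: "\<exists>!c. finite {n. c n \<noteq> \<zero>\<^bsub>A\<^esub>} \<and> (\<forall>n. c n \<in> hom A n) \<and>
          y = finsum A c {n. c n \<noteq> \<zero>\<^bsub>A\<^esub>}" by (simp add: graded_module_def)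
  show ?thesis unfolding comps_def
    by (rule the1_equality[OF ex]) (use assms in auto)
qed

lemma comps_unique':
  assumes "graded_module A" "finite D" "\<And>n. n \<notin> D \<Longrightarrow> c n = \<zero>\<^bsub>A\<^esub>" "\<And>n. c n \<in> hom A n"
    "y = finsum A c D"
  shows "comps A y = c"
proof (rule comps_unique[OF assms(1)])
  show fin: "finite {n. c n \<noteq> \<zero>\<^bsub>A\<^esub>}" 
    by (rule finite_subset[OF _ assms(2)]) (use assms(3) in blast)
  show "\<And>n. c n \<in> hom A n" by fact
  have hc: "\<And>n. hom A n \<subseteq> carrier A" using assms(1) by (simp add: graded_module_def)
  show "y = finsum A c {n. c n \<noteq> \<zero>\<^bsub>A\<^esub>}" unfolding assms(5)
  proof (rule finsum_superset[symmetric])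
    show "abelian_monoid A" using gm_ag[OF assms(1)] abelian_group.axioms(1) by blast
    show "finite D" by fact
    show "{n. c n \<noteq> \<zero>\<^bsub>A\<^esub>} \<subseteq> D" using assms(3) by blast
    show "\<And>i. i \<in> D - {n. c n \<noteq> \<zero>\<^bsub>A\<^esub>} \<Longrightarrow> c i = \<zero>\<^bsub>A\<^esub>" by blast
    show "c \<in> D \<rightarrow> carrier A" using assms(4) hc by blast
  qed
qed



context
  fixes A :: "('k::field_char_0, 'c) cstruct"
  assumes CA: "curved_assoc A"
begin

lemma ca_gm: "graded_module A" using CA by (simp add: curved_assoc_def)
lemma ca_module: "module Kring A" using ca_gm gm_module by blast
lemma ca_ag: "abelian_group A" using ca_gm gm_ag by blast
lemma ca_am: "abelian_monoid A" using ca_ag abelian_group.axioms(1) by blast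

lemma ca_hom_car: "x \<in> hom A n \<Longrightarrow> x \<in> carrier A"
  using ca_gm by (auto simp: graded_module_def)
lemma ca_hom_zero: "\<zero>\<^bsub>A\<^esub> \<in> hom A n"
  using ca_gm by (auto simp: graded_module_def)
lemma ca_hom_add: "x \<in> hom A n \<Longrightarrow> y \<in> hom A n \<Longrightarrow> x \<oplus>\<^bsub>A\<^esub> y \<in> hom A n"
  using ca_gm by (auto simp: graded_module_def)
lemma ca_hom_smult: "x \<in> hom A n \<Longrightarrow> smult A c x \<in> hom A n"
  using ca_gm by (auto simp: graded_module_def)

lemma ca_bil: "bilinear_product A" using CA by (simp add: curved_assoc_def)
lemma ca_mult_closed: "x \<in> carrier A \<Longrightarrow> y \<in> carrier A \<Longrightarrow> x \<otimes>\<^bsub>A\<^esub> y \<in> carrier A"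
  using ca_bil by (simp add: bilinear_product_def)
lemma ca_l_distr: "x \<in> carrier A \<Longrightarrow> y \<in> carrier A \<Longrightarrow> z \<in> carrier A \<Longrightarrow>
  (x \<oplus>\<^bsub>A\<^esub> y) \<otimes>\<^bsub>A\<^esub> z = (x \<otimes>\<^bsub>A\<^esub> z) \<oplus>\<^bsub>A\<^esub> (y \<otimes>\<^bsub>A\<^esub> z)"
  using ca_bil by (simp add: bilinear_product_def)
lemma ca_r_distr: "x \<in> carrier A \<Longrightarrow> y \<in> carrier A \<Longrightarrow> z \<in> carrier A \<Longrightarrow>
  z \<otimes>\<^bsub>A\<^esub> (x \<oplus>\<^bsub>A\<^esub> y) = (z \<otimes>\<^bsub>A\<^esub> x) \<oplus>\<^bsub>A\<^esub> (z \<otimes>\<^bsub>A\<^esub> y)"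
  using ca_bil by (simp add: bilinear_product_def)
lemma ca_smult_l: "x \<in> carrier A \<Longrightarrow> y \<in> carrier A \<Longrightarrow>
  smult A c x \<otimes>\<^bsub>A\<^esub> y = smult A c (x \<otimes>\<^bsub>A\<^esub> y)"
  using ca_bil by (simp add: bilinear_product_def)
lemma ca_smult_r: "x \<in> carrier A \<Longrightarrow> y \<in> carrier A \<Longrightarrow>
  x \<otimes>\<^bsub>A\<^esub> smult A c y = smult A c (x \<otimes>\<^bsub>A\<^esub> y)"
  using ca_bil by (simp add: bilinear_product_def)
lemma ca_mult_hom: "x \<in> hom A p \<Longrightarrow> y \<in> hom A q \<Longrightarrow> x \<otimes>\<^bsub>A\<^esub> y \<in> hom A (p + q)"
  using ca_bil by (simp add: bilinear_product_def)
lemma ca_assoc: "x \<in> carrier A \<Longrightarrow> y \<in> carrier A \<Longrightarrow> z \<in> carrier A \<Longrightarrow>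
  (x \<otimes>\<^bsub>A\<^esub> y) \<otimes>\<^bsub>A\<^esub> z = x \<otimes>\<^bsub>A\<^esub> (y \<otimes>\<^bsub>A\<^esub> z)"
  using CA by (simp add: curved_assoc_def)

lemma ca_pd: "predifferential A" using CA by (simp add: curved_assoc_def)
lemma ca_pd_closed: "x \<in> carrier A \<Longrightarrow> pd A x \<in> carrier A"
  using ca_pd by (simp add: predifferential_def)
lemma ca_pd_add: "x \<in> carrier A \<Longrightarrow> y \<in> carrier A \<Longrightarrow> pd A (x \<oplus>\<^bsub>A\<^esub> y) = pd A x \<oplus>\<^bsub>A\<^esub> pd A y"
  using ca_pd by (simp add: predifferential_def)
lemma ca_pd_smult: "x \<in> carrier A \<Longrightarrow> pd A (smult A c x) = smult A c (pd A x)"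
  using ca_pd by (simp add: predifferential_def)
lemma ca_pd_hom: "x \<in> hom A n \<Longrightarrow> pd A x \<in> hom A (n - 1)"
  using ca_pd by (simp add: predifferential_def)
lemma ca_deriv: "x \<in> hom A p \<Longrightarrow> y \<in> carrier A \<Longrightarrow>
  pd A (x \<otimes>\<^bsub>A\<^esub> y) = (pd A x \<otimes>\<^bsub>A\<^esub> y) \<oplus>\<^bsub>A\<^esub> smult A (ksign p) (x \<otimes>\<^bsub>A\<^esub> pd A y)"
  using CA by (simp add: curved_assoc_def)
lemma ca_curv_hom: "curv A \<in> hom A (-2)"
  using CA by (simp add: curved_assoc_def)
lemma ca_curv_car: "curv A \<in> carrier A"
  using ca_curv_hom ca_hom_car by blast
lemma ca_pd2: "x \<in> carrier A \<Longrightarrow> pd A (pd A x) = (curv A \<otimes>\<^bsub>A\<^esub> x) \<ominus>\<^bsub>A\<^esub> (x \<otimes>\<^bsub>A\<^esub> curv A)"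
  using CA by (simp add: curved_assoc_def)
lemma ca_pd_curv: "pd A (curv A) = \<zero>\<^bsub>A\<^esub>"
  using CA by (simp add: curved_assoc_def)

lemma ca_mult_zero_l: "y \<in> carrier A \<Longrightarrow> \<zero>\<^bsub>A\<^esub> \<otimes>\<^bsub>A\<^esub> y = \<zero>\<^bsub>A\<^esub>"
proof -
  interpret abelian_group A by (rule ca_ag)
  assume y: "y \<in> carrier A"
  have z: "\<zero>\<^bsub>A\<^esub> \<oplus>\<^bsub>A\<^esub> \<zero>\<^bsub>A\<^esub> = \<zero>\<^bsub>A\<^esub>" by simp
  have h: "(\<zero>\<^bsub>A\<^esub> \<otimes>\<^bsub>A\<^esub> y) \<oplus>\<^bsub>A\<^esub> (\<zero>\<^bsub>A\<^esub> \<otimes>\<^bsub>A\<^esub> y) = \<zero>\<^bsub>A\<^esub> \<otimes>\<^bsub>A\<^esub> y"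
    using ca_l_distr[OF zero_closed zero_closed y, unfolded z] by (rule sym)
  show ?thesis by (rule ag_idem_zero[OF ca_ag ca_mult_closed[OF zero_closed y] h])
qed

lemma ca_mult_zero_r: "y \<in> carrier A \<Longrightarrow> y \<otimes>\<^bsub>A\<^esub> \<zero>\<^bsub>A\<^esub> = \<zero>\<^bsub>A\<^esub>"
proof -
  interpret abelian_group A by (rule ca_ag)
  assume y: "y \<in> carrier A"
  have z: "\<zero>\<^bsub>A\<^esub> \<oplus>\<^bsub>A\<^esub> \<zero>\<^bsub>A\<^esub> = \<zero>\<^bsub>A\<^esub>" by simp
  have h: "(y \<otimes>\<^bsub>A\<^esub> \<zero>\<^bsub>A\<^esub>) \<oplus>\<^bsub>A\<^esub> (y \<otimes>\<^bsub>A\<^esub> \<zero>\<^bsub>A\<^esub>) = y \<otimes>\<^bsub>A\<^esub> \<zero>\<^bsub>A\<^esub>"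
    using ca_r_distr[OF zero_closed zero_closed y, unfolded z] by (rule sym)
  show ?thesis by (rule ag_idem_zero[OF ca_ag ca_mult_closed[OF y zero_closed] h])
qed

end

section \<open>Structures embedded in a family of curved algebras\<close>

locale jfam =
  fixes S :: "('k::field_char_0, 't) cstruct" and I :: "'i set"
    and A :: "'i \<Rightarrow> ('k, 'c) cstruct" and E :: "'i \<Rightarrow> 't \<Rightarrow> 'c"
  assumes ca: "\<And>i. i \<in> I \<Longrightarrow> curved_assoc (A i)"
  and Ecar: "\<And>i u. i \<in> I \<Longrightarrow> u \<in> carrier S \<Longrightarrow> E i u \<in> carrier (A i)"
  and inj: "\<And>u v. u \<in> carrier S \<Longrightarrow> v \<in> carrier S \<Longrightarrow> (\<And>i. i \<in> I \<Longrightarrow> E i u = E i v) \<Longrightarrow> u = v"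
  and add_cl: "\<And>u v. u \<in> carrier S \<Longrightarrow> v \<in> carrier S \<Longrightarrow> u \<oplus>\<^bsub>S\<^esub> v \<in> carrier S"
  and E_add: "\<And>i u v. i \<in> I \<Longrightarrow> u \<in> carrier S \<Longrightarrow> v \<in> carrier S \<Longrightarrow>
      E i (u \<oplus>\<^bsub>S\<^esub> v) = E i u \<oplus>\<^bsub>A i\<^esub> E i v"
  and zero_cl: "\<zero>\<^bsub>S\<^esub> \<in> carrier S"
  and E_zero: "\<And>i. i \<in> I \<Longrightarrow> E i \<zero>\<^bsub>S\<^esub> = \<zero>\<^bsub>A i\<^esub>"
  and smult_cl: "\<And>c u. u \<in> carrier S \<Longrightarrow> smult S c u \<in> carrier S"
  and E_smult: "\<And>i c u. i \<in> I \<Longrightarrow> u \<in> carrier S \<Longrightarrow> E i (smult S c u) = smult (A i) c (E i u)"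
  and mult_cl: "\<And>u v. u \<in> carrier S \<Longrightarrow> v \<in> carrier S \<Longrightarrow> u \<otimes>\<^bsub>S\<^esub> v \<in> carrier S"
  and E_mult: "\<And>i u v. i \<in> I \<Longrightarrow> u \<in> carrier S \<Longrightarrow> v \<in> carrier S \<Longrightarrow>
      E i (u \<otimes>\<^bsub>S\<^esub> v) = E i u \<otimes>\<^bsub>A i\<^esub> E i v"
  and pd_cl: "\<And>u. u \<in> carrier S \<Longrightarrow> pd S u \<in> carrier S"
  and E_pd: "\<And>i u. i \<in> I \<Longrightarrow> u \<in> carrier S \<Longrightarrow> E i (pd S u) = pd (A i) (E i u)"
  and curv_cl: "curv S \<in> carrier S"
  and E_curv: "\<And>i. i \<in> I \<Longrightarrow> E i (curv S) = curv (A i)"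
  and homS: "\<And>n. hom S n = {u \<in> carrier S. \<forall>i\<in>I. E i u \<in> hom (A i) n}"
  and dec_ex: "\<And>u n. u \<in> carrier S \<Longrightarrow> \<exists>v\<in>carrier S. \<forall>i\<in>I. E i v = comps (A i) (E i u) n"
  and dec_fin: "\<And>u. u \<in> carrier S \<Longrightarrow>
      \<exists>D. finite D \<and> (\<forall>n. n \<notin> D \<longrightarrow> (\<forall>i\<in>I. comps (A i) (E i u) n = \<zero>\<^bsub>A i\<^esub>))"
begin

lemma neg_ex: "u \<in> carrier S \<Longrightarrow> \<exists>v\<in>carrier S. v \<oplus>\<^bsub>S\<^esub> u = \<zero>\<^bsub>S\<^esub>"
proof -
  assume u: "u \<in> carrier S"
  show ?thesis
  proof (rule bexI[of _ "smult S (-1) u"])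
    show "smult S (-1) u \<oplus>\<^bsub>S\<^esub> u = \<zero>\<^bsub>S\<^esub>"
    proof (rule inj)
      fix i assume i: "i \<in> I"
      interpret M: module Kring "A i" using ca_module[OF ca[OF i]] .
      have "smult (A i) (-1) (E i u) \<oplus>\<^bsub>A i\<^esub> E i u = smult (A i) (-1 + 1) (E i u)"
        using M.smult_l_distr[of "-1" 1 "E i u"] M.smult_one[of "E i u"] Ecar[OF i u] by simp
      then show "E i (smult S (- 1) u \<oplus>\<^bsub>S\<^esub> u) = E i \<zero>\<^bsub>S\<^esub>"
        using i u M.smult_l_null[of "E i u"] Ecar[OF i u] by (simp add: E_add E_smult smult_cl E_zero)
    qed (use u in \<open>simp_all add: add_cl smult_cl zero_cl\<close>)
  qed (use u smult_cl in simp)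
qed

lemma ag_S: "abelian_group S"
proof (rule abelian_groupI)
  show "\<And>x y. x \<in> carrier S \<Longrightarrow> y \<in> carrier S \<Longrightarrow> x \<oplus>\<^bsub>S\<^esub> y \<in> carrier S" by (rule add_cl)
  show "\<zero>\<^bsub>S\<^esub> \<in> carrier S" by (rule zero_cl)
  show "\<And>x. x \<in> carrier S \<Longrightarrow> \<exists>y\<in>carrier S. y \<oplus>\<^bsub>S\<^esub> x = \<zero>\<^bsub>S\<^esub>" by (rule neg_ex)
  fix x y z assume x: "x \<in> carrier S" and y: "y \<in> carrier S" and z: "z \<in> carrier S"
  show "x \<oplus>\<^bsub>S\<^esub> y \<oplus>\<^bsub>S\<^esub> z = x \<oplus>\<^bsub>S\<^esub> (y \<oplus>\<^bsub>S\<^esub> z)"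
  proof (rule inj)
    fix i assume i: "i \<in> I"
    interpret M: abelian_group "A i" using ca_ag[OF ca[OF i]] .
    show "E i (x \<oplus>\<^bsub>S\<^esub> y \<oplus>\<^bsub>S\<^esub> z) = E i (x \<oplus>\<^bsub>S\<^esub> (y \<oplus>\<^bsub>S\<^esub> z))"
      using i x y z by (simp add: E_add add_cl Ecar M.a_assoc)
  qed (use x y z in \<open>simp_all add: add_cl\<close>)
  show "x \<oplus>\<^bsub>S\<^esub> y = y \<oplus>\<^bsub>S\<^esub> x"
  proof (rule inj)
    fix i assume i: "i \<in> I"
    interpret M: abelian_group "A i" using ca_ag[OF ca[OF i]] .
    show "E i (x \<oplus>\<^bsub>S\<^esub> y) = E i (y \<oplus>\<^bsub>S\<^esub> x)"
      using i x y by (simp add: E_add add_cl Ecar M.a_comm)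
  qed (use x y in \<open>simp_all add: add_cl\<close>)
  show "\<zero>\<^bsub>S\<^esub> \<oplus>\<^bsub>S\<^esub> x = x"
  proof (rule inj)
    fix i assume i: "i \<in> I"
    interpret M: abelian_group "A i" using ca_ag[OF ca[OF i]] .
    show "E i (\<zero>\<^bsub>S\<^esub> \<oplus>\<^bsub>S\<^esub> x) = E i x"
      using i x by (simp add: E_add zero_cl E_zero Ecar)
  qed (use x in \<open>simp_all add: add_cl zero_cl\<close>)
qed

lemma am_S: "abelian_monoid S" using ag_S abelian_group.axioms(1) by blast

lemma module_S: "module Kring S"
proof (rule moduleI[OF cring_Kring ag_S])
  show "\<And>a x. a \<in> carrier Kring \<Longrightarrow> x \<in> carrier S \<Longrightarrow> smult S a x \<in> carrier S" by (rule smult_cl)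
  fix a b x y assume x: "x \<in> carrier S" and y: "y \<in> carrier S"
  show "smult S (a \<oplus>\<^bsub>Kring\<^esub> b) x = smult S a x \<oplus>\<^bsub>S\<^esub> smult S b x"
  proof (rule inj)
    fix i assume i: "i \<in> I"
    interpret M: module Kring "A i" using ca_module[OF ca[OF i]] .
    show "E i (smult S (a \<oplus>\<^bsub>Kring\<^esub> b) x) = E i (smult S a x \<oplus>\<^bsub>S\<^esub> smult S b x)"
      using i x M.smult_l_distr[of a b "E i x"] by (simp add: E_add E_smult smult_cl Ecar)
  qed (use x in \<open>simp_all add: add_cl smult_cl\<close>)
  show "smult S a (x \<oplus>\<^bsub>S\<^esub> y) = smult S a x \<oplus>\<^bsub>S\<^esub> smult S a y"
  proof (rule inj)
    fix i assume i: "i \<in> I"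
    interpret M: module Kring "A i" using ca_module[OF ca[OF i]] .
    show "E i (smult S a (x \<oplus>\<^bsub>S\<^esub> y)) = E i (smult S a x \<oplus>\<^bsub>S\<^esub> smult S a y)"
      using i x y M.smult_r_distr[of a "E i x" "E i y"] by (simp add: E_add E_smult smult_cl add_cl Ecar)
  qed (use x y in \<open>simp_all add: add_cl smult_cl\<close>)
  show "smult S (a \<otimes>\<^bsub>Kring\<^esub> b) x = smult S a (smult S b x)"
  proof (rule inj)
    fix i assume i: "i \<in> I"
    interpret M: module Kring "A i" using ca_module[OF ca[OF i]] .
    show "E i (smult S (a \<otimes>\<^bsub>Kring\<^esub> b) x) = E i (smult S a (smult S b x))"
      using i x M.smult_assoc1[of a b "E i x"] by (simp add: E_smult smult_cl Ecar)
  qed (use x in \<open>simp_all add: smult_cl\<close>)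
  show "smult S \<one>\<^bsub>Kring\<^esub> x = x"
  proof (rule inj)
    fix i assume i: "i \<in> I"
    interpret M: module Kring "A i" using ca_module[OF ca[OF i]] .
    show "E i (smult S \<one>\<^bsub>Kring\<^esub> x) = E i x"
      using i x M.smult_one[of "E i x"] by (simp add: E_smult Ecar)
  qed (use x in \<open>simp_all add: smult_cl\<close>)
qed

lemma hom_car: "u \<in> hom S n \<Longrightarrow> u \<in> carrier S" using homS by blast

lemma E_neg: "i \<in> I \<Longrightarrow> u \<in> carrier S \<Longrightarrow> E i (\<ominus>\<^bsub>S\<^esub> u) = \<ominus>\<^bsub>A i\<^esub> E i u"
proof -
  assume i: "i \<in> I" and u: "u \<in> carrier S"
  interpret S: abelian_group S by (rule ag_S)
  interpret M: abelian_group "A i" using ca_ag[OF ca[OF i]] .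
  have "E i (\<ominus>\<^bsub>S\<^esub> u) \<oplus>\<^bsub>A i\<^esub> E i u = \<zero>\<^bsub>A i\<^esub>"
    using i u by (simp add: E_add[symmetric] S.l_neg E_zero)
  then show ?thesis using M.add.inv_equality Ecar i u by (metis S.a_inv_closed)
qed

lemma E_minus: "i \<in> I \<Longrightarrow> u \<in> carrier S \<Longrightarrow> v \<in> carrier S \<Longrightarrow>
   E i (u \<ominus>\<^bsub>S\<^esub> v) = E i u \<ominus>\<^bsub>A i\<^esub> E i v"
proof -
  assume i: "i \<in> I" and u: "u \<in> carrier S" and v: "v \<in> carrier S"
  interpret S: abelian_group S by (rule ag_S)
  show ?thesis using i u v by (simp add: a_minus_def E_add E_neg)
qed

lemma E_finsum: "i \<in> I \<Longrightarrow> finite F \<Longrightarrow> c \<in> F \<rightarrow> carrier S \<Longrightarrow>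
   E i (finsum S c F) = finsum (A i) (\<lambda>n. E i (c n)) F"
  by (rule finsum_hom[OF am_S ca_am[OF ca]]) (auto simp: Ecar E_add E_zero)

lemma finsum_cl: "c \<in> F \<rightarrow> carrier S \<Longrightarrow> finsum S c F \<in> carrier S"
  using abelian_monoid.finsum_closed[OF am_S] by blast

lemma gm_S: "graded_module S"
  unfolding graded_module_def
proof (intro conjI allI ballI)
  show "module Kring S" by (rule module_S)
  fix n
  show "hom S n \<subseteq> carrier S" using homS by blast
  show "\<zero>\<^bsub>S\<^esub> \<in> hom S n" using homS zero_cl E_zero ca_hom_zero[OF ca] by simp
  show "\<And>x y. x \<in> hom S n \<Longrightarrow> y \<in> hom S n \<Longrightarrow> x \<oplus>\<^bsub>S\<^esub> y \<in> hom S n"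
    using homS add_cl E_add ca_hom_add[OF ca] by simp
  show "\<And>c x. x \<in> hom S n \<Longrightarrow> smult S c x \<in> hom S n"
    using homS smult_cl E_smult ca_hom_smult[OF ca] by simp
next
  fix x assume x: "x \<in> carrier S"
  define c where "c n = (SOME v. v \<in> carrier S \<and> (\<forall>i\<in>I. E i v = comps (A i) (E i x) n))" for n
  have cP: "c n \<in> carrier S \<and> (\<forall>i\<in>I. E i (c n) = comps (A i) (E i x) n)" for n
    unfolding c_def by (rule someI_ex) (use dec_ex[OF x, of n] in blast)
  obtain D where D: "finite D" "\<And>n i. n \<notin> D \<Longrightarrow> i \<in> I \<Longrightarrow> comps (A i) (E i x) n = \<zero>\<^bsub>A i\<^esub>"
    using dec_fin[OF x] by blast
  have c0: "c n = \<zero>\<^bsub>S\<^esub>" if "n \<notin> D" for n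
    by (rule inj) (use cP zero_cl D(2)[OF that] E_zero in auto)
  have chom: "c n \<in> hom S n" for n
    using cP homS comps_props(2)[OF ca_gm[OF ca] Ecar[OF _ x]] by auto
  have fin: "finite {n. c n \<noteq> \<zero>\<^bsub>S\<^esub>}"
    by (rule finite_subset[OF _ D(1)]) (use c0 in blast)
  have sum: "x = finsum S c {n. c n \<noteq> \<zero>\<^bsub>S\<^esub>}"
  proof (rule inj)
    show "x \<in> carrier S" by fact
    show "finsum S c {n. c n \<noteq> \<zero>\<^bsub>S\<^esub>} \<in> carrier S" using finsum_cl cP by blast
    fix i assume i: "i \<in> I"
    have gA: "graded_module (A i)" using ca_gm[OF ca[OF i]] .
    have "E i (finsum S c {n. c n \<noteq> \<zero>\<^bsub>S\<^esub>}) = finsum (A i) (\<lambda>n. E i (c n)) {n. c n \<noteq> \<zero>\<^bsub>S\<^esub>}"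
      using E_finsum[OF i fin] cP by blast
    also have "\<dots> = finsum (A i) (comps (A i) (E i x)) {n. c n \<noteq> \<zero>\<^bsub>S\<^esub>}"
      using cP i by simp
    also have "\<dots> = finsum (A i) (comps (A i) (E i x)) {n. comps (A i) (E i x) n \<noteq> \<zero>\<^bsub>A i\<^esub>}"
    proof (rule finsum_superset[symmetric, OF ca_am[OF ca[OF i]] fin])
      show "{n. comps (A i) (E i x) n \<noteq> \<zero>\<^bsub>A i\<^esub>} \<subseteq> {n. c n \<noteq> \<zero>\<^bsub>S\<^esub>}"
        using cP i E_zero by (auto, metis)
      show "\<And>n. n \<in> {n. c n \<noteq> \<zero>\<^bsub>S\<^esub>} - {n. comps (A i) (E i x) n \<noteq> \<zero>\<^bsub>A i\<^esub>} \<Longrightarrow>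
             comps (A i) (E i x) n = \<zero>\<^bsub>A i\<^esub>" by blast
      show "comps (A i) (E i x) \<in> {n. c n \<noteq> \<zero>\<^bsub>S\<^esub>} \<rightarrow> carrier (A i)"
        using comps_props(2)[OF gA Ecar[OF i x]] ca_hom_car[OF ca[OF i]] by blast
    qed
    also have "\<dots> = E i x" using comps_props(3)[OF gA Ecar[OF i x]] by simp
    finally show "E i x = E i (finsum S c {n. c n \<noteq> \<zero>\<^bsub>S\<^esub>})" by simp
  qed
  show "\<exists>!c. finite {n. c n \<noteq> \<zero>\<^bsub>S\<^esub>} \<and> (\<forall>n. c n \<in> hom S n) \<and> x = finsum S c {n. c n \<noteq> \<zero>\<^bsub>S\<^esub>}"
  proof (rule ex1I[of _ c])
    show "finite {n. c n \<noteq> \<zero>\<^bsub>S\<^esub>} \<and> (\<forall>n. c n \<in> hom S n) \<and> x = finsum S c {n. c n \<noteq> \<zero>\<^bsub>S\<^esub>}"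
      using fin chom sum by blast
    fix c' assume c': "finite {n. c' n \<noteq> \<zero>\<^bsub>S\<^esub>} \<and> (\<forall>n. c' n \<in> hom S n) \<and> x = finsum S c' {n. c' n \<noteq> \<zero>\<^bsub>S\<^esub>}"
    show "c' = c"
    proof
      fix n
      show "c' n = c n"
      proof (rule inj)
        show "c' n \<in> carrier S" using c' hom_car by blast
        show "c n \<in> carrier S" using cP by blast
        fix i assume i: "i \<in> I"
        have gA: "graded_module (A i)" using ca_gm[OF ca[OF i]] .
        have "comps (A i) (E i x) = (\<lambda>n. E i (c' n))"
        proof (rule comps_unique'[OF gA])
          show "finite {n. c' n \<noteq> \<zero>\<^bsub>S\<^esub>}" using c' by blast
          show "\<And>n. n \<notin> {n. c' n \<noteq> \<zero>\<^bsub>S\<^esub>} \<Longrightarrow> E i (c' n) = \<zero>\<^bsub>A i\<^esub>" using E_zero i by auto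
          show "\<And>n. E i (c' n) \<in> hom (A i) n" using c' homS i by auto
          have "E i x = E i (finsum S c' {n. c' n \<noteq> \<zero>\<^bsub>S\<^esub>})" using c' by simp
          also have "\<dots> = finsum (A i) (\<lambda>n. E i (c' n)) {n. c' n \<noteq> \<zero>\<^bsub>S\<^esub>}"
            by (rule E_finsum[OF i]) (use c' hom_car in blast)+
          finally show "E i x = finsum (A i) (\<lambda>n. E i (c' n)) {n. c' n \<noteq> \<zero>\<^bsub>S\<^esub>}" .
        qed
        then show "E i (c' n) = E i (c n)" using cP i by metis
      qed
    qed
  qed
qed

lemma E_comps: "i \<in> I \<Longrightarrow> u \<in> carrier S \<Longrightarrow> E i (comps S u n) = comps (A i) (E i u) n"
proof -
  assume i: "i \<in> I" and u: "u \<in> carrier S"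
  have gA: "graded_module (A i)" using ca_gm[OF ca[OF i]] .
  note cp = comps_props[OF gm_S u]
  have "comps (A i) (E i u) = (\<lambda>n. E i (comps S u n))"
  proof (rule comps_unique'[OF gA cp(1)])
    show "\<And>n. n \<notin> {n. comps S u n \<noteq> \<zero>\<^bsub>S\<^esub>} \<Longrightarrow> E i (comps S u n) = \<zero>\<^bsub>A i\<^esub>" using E_zero i by auto
    show "\<And>n. E i (comps S u n) \<in> hom (A i) n" using cp(2) homS i by auto
    have "E i u = E i (finsum S (comps S u) {n. comps S u n \<noteq> \<zero>\<^bsub>S\<^esub>})" using cp(3) by simp
    also have "\<dots> = finsum (A i) (\<lambda>n. E i (comps S u n)) {n. comps S u n \<noteq> \<zero>\<^bsub>S\<^esub>}"
      by (rule E_finsum[OF i cp(1)]) (use cp(2) hom_car in blast)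
    finally show "E i u = finsum (A i) (\<lambda>n. E i (comps S u n)) {n. comps S u n \<noteq> \<zero>\<^bsub>S\<^esub>}" .
  qed
  then show ?thesis by metis
qed

lemma comps_S_car: "u \<in> carrier S \<Longrightarrow> comps S u n \<in> carrier S"
  using comps_props(2)[OF gm_S] hom_car by blast

lemma bil_S: "bilinear_product S"
  unfolding bilinear_product_def
proof (intro conjI ballI allI)
  fix x y z assume x: "x \<in> carrier S" and y: "y \<in> carrier S" and z: "z \<in> carrier S"
  show "x \<otimes>\<^bsub>S\<^esub> y \<in> carrier S" using x y mult_cl by blast
  show "(x \<oplus>\<^bsub>S\<^esub> y) \<otimes>\<^bsub>S\<^esub> z = (x \<otimes>\<^bsub>S\<^esub> z) \<oplus>\<^bsub>S\<^esub> (y \<otimes>\<^bsub>S\<^esub> z)"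
    by (rule inj) (use x y z in \<open>simp_all add: mult_cl add_cl E_mult E_add Ecar ca_l_distr[OF ca]\<close>)
  show "z \<otimes>\<^bsub>S\<^esub> (x \<oplus>\<^bsub>S\<^esub> y) = (z \<otimes>\<^bsub>S\<^esub> x) \<oplus>\<^bsub>S\<^esub> (z \<otimes>\<^bsub>S\<^esub> y)"
    by (rule inj) (use x y z in \<open>simp_all add: mult_cl add_cl E_mult E_add Ecar ca_r_distr[OF ca]\<close>)
next
  fix c x y assume x: "x \<in> carrier S" and y: "y \<in> carrier S"
  show "smult S c x \<otimes>\<^bsub>S\<^esub> y = smult S c (x \<otimes>\<^bsub>S\<^esub> y)"
    by (rule inj) (use x y in \<open>simp_all add: mult_cl smult_cl E_mult E_smult Ecar ca_smult_l[OF ca]\<close>)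
  show "x \<otimes>\<^bsub>S\<^esub> smult S c y = smult S c (x \<otimes>\<^bsub>S\<^esub> y)"
    by (rule inj) (use x y in \<open>simp_all add: mult_cl smult_cl E_mult E_smult Ecar ca_smult_r[OF ca]\<close>)
next
  fix p q x y assume x: "x \<in> hom S p" and y: "y \<in> hom S q"
  show "x \<otimes>\<^bsub>S\<^esub> y \<in> hom S (p + q)"
    using x y homS mult_cl E_mult ca_mult_hom[OF ca] by simp
qed

lemma pd_S: "predifferential S"
  unfolding predifferential_def
proof (intro conjI ballI allI)
  fix x y assume x: "x \<in> carrier S" and y: "y \<in> carrier S"
  show "pd S x \<in> carrier S" using x pd_cl by blast
  show "pd S (x \<oplus>\<^bsub>S\<^esub> y) = pd S x \<oplus>\<^bsub>S\<^esub> pd S y"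
    by (rule inj) (use x y in \<open>simp_all add: pd_cl add_cl E_pd E_add Ecar ca_pd_add[OF ca]\<close>)
next
  fix c x assume x: "x \<in> carrier S"
  show "pd S (smult S c x) = smult S c (pd S x)"
    by (rule inj) (use x in \<open>simp_all add: pd_cl smult_cl E_pd E_smult Ecar ca_pd_smult[OF ca]\<close>)
next
  fix n x assume x: "x \<in> hom S n"
  show "pd S x \<in> hom S (n - 1)"
    using x homS pd_cl E_pd ca_pd_hom[OF ca] by simp
qed

lemma ca_S: "curved_assoc S"
  unfolding curved_assoc_def
proof (intro conjI ballI allI)
  show "graded_module S" by (rule gm_S)
  show "bilinear_product S" by (rule bil_S)
  show "predifferential S" by (rule pd_S)
  show "curv S \<in> hom S (-2)" using homS curv_cl E_curv ca_curv_hom[OF ca] by simp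
  show "pd S (curv S) = \<zero>\<^bsub>S\<^esub>"
    by (rule inj) (simp_all add: pd_cl curv_cl zero_cl E_pd E_curv E_zero ca_pd_curv[OF ca])
next
  fix x y z assume x: "x \<in> carrier S" and y: "y \<in> carrier S" and z: "z \<in> carrier S"
  show "(x \<otimes>\<^bsub>S\<^esub> y) \<otimes>\<^bsub>S\<^esub> z = x \<otimes>\<^bsub>S\<^esub> (y \<otimes>\<^bsub>S\<^esub> z)"
    by (rule inj) (use x y z in \<open>simp_all add: mult_cl E_mult Ecar ca_assoc[OF ca]\<close>)
next
  fix x assume x: "x \<in> carrier S"
  interpret S: abelian_group S by (rule ag_S)
  show "pd S (pd S x) = (curv S \<otimes>\<^bsub>S\<^esub> x) \<ominus>\<^bsub>S\<^esub> (x \<otimes>\<^bsub>S\<^esub> curv S)"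
    by (rule inj) (use x in \<open>simp_all add: pd_cl mult_cl curv_cl E_pd E_mult E_curv E_minus Ecar ca_pd2[OF ca]\<close>)
next
  fix p x y assume x: "x \<in> hom S p" and y: "y \<in> carrier S"
  have xc: "x \<in> carrier S" using x hom_car by blast
  show "pd S (x \<otimes>\<^bsub>S\<^esub> y) = (pd S x \<otimes>\<^bsub>S\<^esub> y) \<oplus>\<^bsub>S\<^esub> smult S (ksign p) (x \<otimes>\<^bsub>S\<^esub> pd S y)"
  proof (rule inj)
    fix i assume i: "i \<in> I"
    have xh: "E i x \<in> hom (A i) p" using x homS i by blast
    show "E i (pd S (x \<otimes>\<^bsub>S\<^esub> y)) = E i ((pd S x \<otimes>\<^bsub>S\<^esub> y) \<oplus>\<^bsub>S\<^esub> smult S (ksign p) (x \<otimes>\<^bsub>S\<^esub> pd S y))"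
      using i xc y by (simp add: pd_cl mult_cl add_cl smult_cl E_pd E_mult E_add E_smult Ecar ca_deriv[OF ca xh])
  qed (use xc y in \<open>simp_all add: pd_cl mult_cl add_cl smult_cl\<close>)
qed

lemma cmor_E: "i \<in> I \<Longrightarrow> cmor S (A i) (E i)"
  unfolding cmor_def using Ecar E_add E_smult homS E_mult E_pd E_curv by auto

end



lemma Skew_simps[simp]:
  "carrier (Skew A) = carrier A" "add (Skew A) = add A" "zero (Skew A) = zero A"
  "smult (Skew A) = smult A" "hom (Skew A) = hom A" "pd (Skew A) = pd A" "curv (Skew A) = curv A"
  "mult (Skew A) = skew_bracket A"
  by (simp_all add: Skew_def)

lemma cl_gm: "curved_lie g \<Longrightarrow> graded_module g" unfolding curved_lie_def by (elim conjE)
lemma cl_bil: "curved_lie g \<Longrightarrow> bilinear_product g" unfolding curved_lie_def by (elim conjE)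
lemma cl_pd: "curved_lie g \<Longrightarrow> predifferential g" unfolding curved_lie_def by (elim conjE)
lemma cl_curv_hom: "curved_lie g \<Longrightarrow> curv g \<in> hom g (-2)" unfolding curved_lie_def by (elim conjE)
lemma cl_ag: "curved_lie g \<Longrightarrow> abelian_group g" using cl_gm gm_ag by blast
lemma cl_module: "curved_lie g \<Longrightarrow> module Kring g" using cl_gm gm_module by blast
lemma cl_hom_car: "curved_lie g \<Longrightarrow> x \<in> hom g n \<Longrightarrow> x \<in> carrier g"
  using cl_gm[of g] by (auto simp: graded_module_def)
lemma cl_mult_closed: "curved_lie g \<Longrightarrow> x \<in> carrier g \<Longrightarrow> y \<in> carrier g \<Longrightarrow> x \<otimes>\<^bsub>g\<^esub> y \<in> carrier g"
  using cl_bil[of g] by (simp add: bilinear_product_def)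
lemma cl_pd_closed: "curved_lie g \<Longrightarrow> x \<in> carrier g \<Longrightarrow> pd g x \<in> carrier g"
proof -
  assume "curved_lie g" "x \<in> carrier g"
  moreover have "\<forall>x\<in>carrier g. pd g x \<in> carrier g" using cl_pd[OF \<open>curved_lie g\<close>] unfolding predifferential_def by (elim conjE)
  ultimately show ?thesis by blast
qed
lemma cl_pd_hom: "curved_lie g \<Longrightarrow> x \<in> hom g n \<Longrightarrow> pd g x \<in> hom g (n - 1)"
proof -
  assume "curved_lie g" "x \<in> hom g n"
  moreover have "\<forall>n. \<forall>x\<in>hom g n. pd g x \<in> hom g (n - 1)" using cl_pd[OF \<open>curved_lie g\<close>] unfolding predifferential_def by (elim conjE)
  ultimately show ?thesis by blast
qed
lemma cl_curv_car: "curved_lie g \<Longrightarrow> curv g \<in> carrier g"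
  by (rule cl_hom_car[OF _ cl_curv_hom])

context jfam begin

lemma degs_S_fin: "u \<in> carrier S \<Longrightarrow> finite (degs S u)"
  unfolding degs_def using comps_props(1)[OF gm_S] by blast

lemma skew_cl: "u \<in> carrier S \<Longrightarrow> v \<in> carrier S \<Longrightarrow> skew_bracket S u v \<in> carrier S"
proof -
  assume u: "u \<in> carrier S" and v: "v \<in> carrier S"
  interpret S: abelian_group S by (rule ag_S)
  show ?thesis unfolding skew_bracket_def
    by (intro S.minus_closed mult_cl u v finsum_cl Pi_I smult_cl comps_S_car)
qed

lemma E_skew: "i \<in> I \<Longrightarrow> u \<in> carrier S \<Longrightarrow> v \<in> carrier S \<Longrightarrow>
  E i (skew_bracket S u v) = skew_bracket (A i) (E i u) (E i v)"
proof -
  assume i: "i \<in> I" and u: "u \<in> carrier S" and v: "v \<in> carrier S"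
  interpret S: abelian_group S by (rule ag_S)
  interpret M: module Kring "A i" using ca_module[OF ca[OF i]] .
  have CA: "curved_assoc (A i)" using ca[OF i] .
  have gA: "graded_module (A i)" using ca_gm[OF CA] .
  define cu where "cu = comps (A i) (E i u)"
  define cv where "cv = comps (A i) (E i v)"
  have cuc: "cu p \<in> carrier (A i)" for p
    unfolding cu_def using comps_props(2)[OF gA Ecar[OF i u]] ca_hom_car[OF CA] by blast
  have cvc: "cv p \<in> carrier (A i)" for p
    unfolding cv_def using comps_props(2)[OF gA Ecar[OF i v]] ca_hom_car[OF CA] by blast
  have finSu: "finite (degs S u)" using degs_S_fin[OF u] .
  have finSv: "finite (degs S v)" using degs_S_fin[OF v] .
  have degu: "degs (A i) (E i u) \<subseteq> degs S u"
  proof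
    fix p assume "p \<in> degs (A i) (E i u)"
    then show "p \<in> degs S u" unfolding degs_def using E_comps[OF i u, of p] E_zero[OF i] by auto
  qed
  have degv: "degs (A i) (E i v) \<subseteq> degs S v"
  proof
    fix p assume "p \<in> degs (A i) (E i v)"
    then show "p \<in> degs S v" unfolding degs_def using E_comps[OF i v, of p] E_zero[OF i] by auto
  qed
  define inS where "inS p = finsum S (\<lambda>q. smult S (ksign (p * q)) (comps S v q \<otimes>\<^bsub>S\<^esub> comps S u p)) (degs S v)" for p
  define t where "t p q = smult (A i) (ksign (p * q)) (cv q \<otimes>\<^bsub>A i\<^esub> cu p)" for p q
  have tc: "t p q \<in> carrier (A i)" for p q
    unfolding t_def using cuc cvc ca_mult_closed[OF CA] by simp
  have inSc: "inS p \<in> carrier S" for p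
    unfolding inS_def by (intro finsum_cl Pi_I smult_cl mult_cl comps_S_car u v)
  have EinS: "E i (inS p) = finsum (A i) (t p) (degs (A i) (E i v))" for p
  proof -
    have "E i (inS p) = finsum (A i) (\<lambda>q. E i (smult S (ksign (p * q)) (comps S v q \<otimes>\<^bsub>S\<^esub> comps S u p))) (degs S v)"
      unfolding inS_def by (rule E_finsum[OF i finSv]) (intro Pi_I smult_cl mult_cl comps_S_car u v)
    also have "\<dots> = finsum (A i) (t p) (degs S v)"
      unfolding t_def cu_def cv_def
      by (rule M.finsum_cong') (simp_all add: E_smult E_mult E_comps mult_cl comps_S_car u v i tc[unfolded t_def cu_def cv_def])
    also have "\<dots> = finsum (A i) (t p) (degs (A i) (E i v))"
    proof (rule finsum_superset[symmetric, OF ca_am[OF CA] finSv degv])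
      show "t p \<in> degs S v \<rightarrow> carrier (A i)" using tc by blast
      fix q assume "q \<in> degs S v - degs (A i) (E i v)"
      then have "cv q = \<zero>\<^bsub>A i\<^esub>" unfolding degs_def cv_def by auto
      then show "t p q = \<zero>\<^bsub>A i\<^esub>" unfolding t_def using ca_mult_zero_l[OF CA cuc] by simp
    qed
    finally show ?thesis .
  qed
  have sk: "skew_bracket S u v = (u \<otimes>\<^bsub>S\<^esub> v) \<ominus>\<^bsub>S\<^esub> finsum S inS (degs S u)"
    unfolding skew_bracket_def inS_def by simp
  have "E i (skew_bracket S u v) = E i (u \<otimes>\<^bsub>S\<^esub> v) \<ominus>\<^bsub>A i\<^esub> E i (finsum S inS (degs S u))"
    unfolding sk by (rule E_minus[OF i mult_cl[OF u v] finsum_cl]) (use inSc in blast)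
  also have "E i (u \<otimes>\<^bsub>S\<^esub> v) = E i u \<otimes>\<^bsub>A i\<^esub> E i v" by (rule E_mult[OF i u v])
  also have "E i (finsum S inS (degs S u)) = finsum (A i) (\<lambda>p. E i (inS p)) (degs S u)"
    by (rule E_finsum[OF i finSu]) (use inSc in blast)
  also have "finsum (A i) (\<lambda>p. E i (inS p)) (degs S u) = finsum (A i) (\<lambda>p. finsum (A i) (t p) (degs (A i) (E i v))) (degs (A i) (E i u))"
  proof -
    have "finsum (A i) (\<lambda>p. E i (inS p)) (degs S u) = finsum (A i) (\<lambda>p. finsum (A i) (t p) (degs (A i) (E i v))) (degs S u)"
      using EinS by simp
    also have "\<dots> = finsum (A i) (\<lambda>p. finsum (A i) (t p) (degs (A i) (E i v))) (degs (A i) (E i u))"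
    proof (rule finsum_superset[symmetric, OF ca_am[OF CA] finSu degu])
      show "(\<lambda>p. finsum (A i) (t p) (degs (A i) (E i v))) \<in> degs S u \<rightarrow> carrier (A i)"
      proof (rule Pi_I)
        fix p show "finsum (A i) (t p) (degs (A i) (E i v)) \<in> carrier (A i)"
          by (rule M.finsum_closed) (use tc in blast)
      qed
      fix p assume "p \<in> degs S u - degs (A i) (E i u)"
      then have "cu p = \<zero>\<^bsub>A i\<^esub>" unfolding degs_def cu_def by auto
      then have "t p = (\<lambda>q. \<zero>\<^bsub>A i\<^esub>)" unfolding t_def using ca_mult_zero_r[OF CA cvc] by simp
      then show "finsum (A i) (t p) (degs (A i) (E i v)) = \<zero>\<^bsub>A i\<^esub>" using M.finsum_zero by simp
    qed
    finally show ?thesis .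
  qed
  finally show ?thesis unfolding skew_bracket_def t_def cu_def cv_def .
qed

lemma eta_cmor:
  assumes g: "curved_lie g"
    and eta: "\<And>x. x \<in> carrier g \<Longrightarrow> eta x \<in> carrier S"
    and Ef: "\<And>i x. i \<in> I \<Longrightarrow> x \<in> carrier g \<Longrightarrow> E i (eta x) = F i x"
    and Fc: "\<And>i. i \<in> I \<Longrightarrow> cmor g (Skew (A i)) (F i)"
  shows "cmor g (Skew S) eta"
proof -
  interpret G: module Kring g using cl_module[OF g] .
  have F1: "\<And>i x. i \<in> I \<Longrightarrow> x \<in> carrier g \<Longrightarrow> F i x \<in> carrier (A i)"
    and F2: "\<And>i x y. i \<in> I \<Longrightarrow> x \<in> carrier g \<Longrightarrow> y \<in> carrier g \<Longrightarrow> F i (x \<oplus>\<^bsub>g\<^esub> y) = F i x \<oplus>\<^bsub>A i\<^esub> F i y"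
    and F3: "\<And>i c x. i \<in> I \<Longrightarrow> x \<in> carrier g \<Longrightarrow> F i (smult g c x) = smult (A i) c (F i x)"
    and F4: "\<And>i n x. i \<in> I \<Longrightarrow> x \<in> hom g n \<Longrightarrow> F i x \<in> hom (A i) n"
    and F5: "\<And>i x y. i \<in> I \<Longrightarrow> x \<in> carrier g \<Longrightarrow> y \<in> carrier g \<Longrightarrow> F i (x \<otimes>\<^bsub>g\<^esub> y) = skew_bracket (A i) (F i x) (F i y)"
    and F6: "\<And>i x. i \<in> I \<Longrightarrow> x \<in> carrier g \<Longrightarrow> F i (pd g x) = pd (A i) (F i x)"
    and F7: "\<And>i. i \<in> I \<Longrightarrow> F i (curv g) = curv (A i)"
    using Fc unfolding cmor_def by simp_all
  show ?thesis unfolding cmor_def Skew_simps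
  proof (intro conjI ballI allI)
    fix x y assume x: "x \<in> carrier g" and y: "y \<in> carrier g"
    show "eta x \<in> carrier S" using eta x by blast
    show "eta (x \<oplus>\<^bsub>g\<^esub> y) = eta x \<oplus>\<^bsub>S\<^esub> eta y"
      by (rule inj) (use x y in \<open>simp_all add: eta add_cl E_add Ef F2\<close>)
    show "eta (x \<otimes>\<^bsub>g\<^esub> y) = skew_bracket S (eta x) (eta y)"
      by (rule inj) (use x y in \<open>simp_all add: eta skew_cl cl_mult_closed[OF g] E_skew Ef F5\<close>)
    show "eta (pd g x) = pd S (eta x)"
      by (rule inj) (use x in \<open>simp_all add: eta pd_cl cl_pd_closed[OF g] E_pd Ef F6\<close>)
  next
    fix c x assume x: "x \<in> carrier g"
    show "eta (smult g c x) = smult S c (eta x)"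
      by (rule inj) (use x in \<open>simp_all add: eta smult_cl E_smult Ef F3\<close>)
  next
    fix n x assume x: "x \<in> hom g n"
    have xc: "x \<in> carrier g" using cl_hom_car[OF g x] .
    show "eta x \<in> hom S n" using homS eta[OF xc] Ef[OF _ xc] F4[OF _ x] by simp
  next
    show "eta (curv g) = curv S"
      by (rule inj) (simp_all add: eta cl_curv_car[OF g] curv_cl E_curv Ef F7)
  qed
qed

end



definition Hg :: "('k::field_char_0, 'a) cstruct \<Rightarrow> 'a set" where
  "Hg g = {x. \<exists>n. x \<in> hom g n}"

definition dg :: "('k::field_char_0, 'a) cstruct \<Rightarrow> 'a \<Rightarrow> int" where
  "dg g x = (SOME n. x \<in> hom g n)"

definition valid :: "('k::field_char_0, 'a) cstruct \<Rightarrow> ('k \<times> 'a list) list \<Rightarrow> bool" where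
  "valid g r \<longleftrightarrow> (\<forall>p\<in>set r. snd p \<noteq> [] \<and> set (snd p) \<subseteq> Hg g)"

fun evw :: "('k, 'c) cstruct \<Rightarrow> ('a \<Rightarrow> 'c) \<Rightarrow> 'a list \<Rightarrow> 'c" where
  "evw A f [] = \<zero>\<^bsub>A\<^esub>"
| "evw A f [x] = f x"
| "evw A f (x # y # w) = f x \<otimes>\<^bsub>A\<^esub> evw A f (y # w)"

fun evt :: "('k, 'c) cstruct \<Rightarrow> ('a \<Rightarrow> 'c) \<Rightarrow> ('k \<times> 'a list) list \<Rightarrow> 'c" where
  "evt A f [] = \<zero>\<^bsub>A\<^esub>"
| "evt A f (p # r) = smult A (fst p) (evw A f (snd p)) \<oplus>\<^bsub>A\<^esub> evt A f r"

definition wdeg :: "('k::field_char_0, 'a) cstruct \<Rightarrow> 'a list \<Rightarrow> int" where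
  "wdeg g w = sum_list (map (dg g) w)"

definition proj :: "('k::field_char_0, 'a) cstruct \<Rightarrow> int \<Rightarrow> ('k \<times> 'a list) list \<Rightarrow> ('k \<times> 'a list) list" where
  "proj g n r = filter (\<lambda>p. wdeg g (snd p) = n) r"

definition rsm :: "'k::field_char_0 \<Rightarrow> ('k \<times> 'a list) list \<Rightarrow> ('k \<times> 'a list) list" where
  "rsm c r = map (\<lambda>p. (c * fst p, snd p)) r"

definition rmul :: "('k::field_char_0 \<times> 'a list) list \<Rightarrow> ('k \<times> 'a list) list \<Rightarrow> ('k \<times> 'a list) list" where
  "rmul r s = concat (map (\<lambda>p. map (\<lambda>q. (fst p * fst q, snd p @ snd q)) s) r)"

fun wpd :: "('k::field_char_0, 'a) cstruct \<Rightarrow> 'a list \<Rightarrow> ('k \<times> 'a list) list" where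
  "wpd g [] = []"
| "wpd g [x] = [(1, [pd g x])]"
| "wpd g (x # y # w) = (1, pd g x # y # w) # map (\<lambda>q. (ksign (dg g x) * fst q, x # snd q)) (wpd g (y # w))"

definition rpd :: "('k::field_char_0, 'a) cstruct \<Rightarrow> ('k \<times> 'a list) list \<Rightarrow> ('k \<times> 'a list) list" where
  "rpd g r = concat (map (\<lambda>p. rsm (fst p) (wpd g (snd p))) r)"

definition lift :: "('k::field_char_0, 'a) cstruct \<Rightarrow> 'a \<Rightarrow> ('k \<times> 'a list) list" where
  "lift g x = map (\<lambda>n. (1, [comps g x n])) (sorted_list_of_set (degs g x))"

lemma rmul_simps[simp]: "rmul [] s = []" "rmul (p # r) s = map (\<lambda>q. (fst p * fst q, snd p @ snd q)) s @ rmul r s"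
  by (simp_all add: rmul_def)
lemma rpd_simps[simp]: "rpd g [] = []" "rpd g (p # r) = rsm (fst p) (wpd g (snd p)) @ rpd g r"
  by (simp_all add: rpd_def)
lemma rsm_simps[simp]: "rsm c [] = []" "rsm c (p # r) = (c * fst p, snd p) # rsm c r"
  by (simp_all add: rsm_def)
lemma proj_simps[simp]: "proj g n [] = []"
  "proj g n (p # r) = (if wdeg g (snd p) = n then p # proj g n r else proj g n r)"
  by (simp_all add: proj_def)

lemma valid_simps[simp]: "valid g []" "valid g (p # r) \<longleftrightarrow> snd p \<noteq> [] \<and> set (snd p) \<subseteq> Hg g \<and> valid g r"
  "valid g (r @ s) \<longleftrightarrow> valid g r \<and> valid g s"
  by (auto simp: valid_def)

lemma wpd_nonempty: "q \<in> set (wpd g w) \<Longrightarrow> snd q \<noteq> []"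
  by (induction g w rule: wpd.induct) auto

lemma wdeg_simps[simp]: "wdeg g [] = 0" "wdeg g (x # w) = dg g x + wdeg g w"
  by (simp_all add: wdeg_def)

context
  fixes g :: "('k::field_char_0, 'a) cstruct"
  assumes g: "curved_lie g"
begin

lemma Hg_hom: "x \<in> Hg g \<Longrightarrow> x \<in> hom g (dg g x)"
  unfolding Hg_def dg_def by (rule someI_ex) simp

lemma Hg_car: "x \<in> Hg g \<Longrightarrow> x \<in> carrier g"
  using Hg_hom cl_hom_car[OF g] by blast

lemma Hg_pd: "x \<in> Hg g \<Longrightarrow> pd g x \<in> Hg g"
  using Hg_hom cl_pd_hom[OF g] unfolding Hg_def by blast

lemma valid_rsm[simp]: "valid g (rsm c r) \<longleftrightarrow> valid g r"
  by (induction r) auto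

lemma valid_map_app: "set w \<subseteq> Hg g \<Longrightarrow> valid g s \<Longrightarrow> valid g (map (\<lambda>q. (c * fst q, w @ snd q)) s)"
  by (induction s) auto

lemma valid_rmul: "valid g r \<Longrightarrow> valid g s \<Longrightarrow> valid g (rmul r s)"
  by (induction r) (auto intro: valid_map_app)

lemma valid_map_cons: "x \<in> Hg g \<Longrightarrow> valid g s \<Longrightarrow> valid g (map (\<lambda>q. (c * fst q, x # snd q)) s)"
  by (induction s) auto

lemma valid_wpd: "set w \<subseteq> Hg g \<Longrightarrow> valid g (wpd g w)"
proof (induction w)
  case Nil
  then show ?case by simp
next
  case (Cons x w)
  show ?case
  proof (cases w)
    case Nil
    then show ?thesis using Cons.prems Hg_pd by simp
  next
    case (Cons y w')
    then show ?thesis using Cons.IH Cons.prems Hg_pd valid_map_cons by simp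
  qed
qed

lemma valid_rpd: "valid g r \<Longrightarrow> valid g (rpd g r)"
  by (induction r) (auto intro: valid_wpd)

lemma valid_proj: "valid g r \<Longrightarrow> valid g (proj g n r)"
  by (induction r) auto

lemma valid_lift_aux: "(\<And>n. h n \<in> Hg g) \<Longrightarrow> valid g (map (\<lambda>n. (1, [h n])) ns)"
  by (induction ns) auto

lemma valid_lift: "x \<in> carrier g \<Longrightarrow> valid g (lift g x)"
  unfolding lift_def
proof (rule valid_lift_aux)
  fix n assume "x \<in> carrier g"
  then have "comps g x n \<in> hom g n" using comps_props(2)[OF cl_gm[OF g]] by blast
  then show "comps g x n \<in> Hg g" unfolding Hg_def by blast
qed

lemma valid_curv: "valid g [(1, [curv g])]"
  using cl_curv_hom[OF g] by (auto simp: Hg_def)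

end

section \<open>Evaluation in a curved associative algebra\<close>

locale evctx =
  fixes g :: "('k::field_char_0, 'a) cstruct" and A :: "('k, 'c) cstruct" and f :: "'a \<Rightarrow> 'c"
  assumes g: "curved_lie g" and CA: "curved_assoc A" and F: "cmor g (Skew A) f"
begin

sublocale M: module Kring A by (rule ca_module[OF CA])

lemma f_car: "x \<in> carrier g \<Longrightarrow> f x \<in> carrier A"
  using F unfolding cmor_def by simp
lemma f_add: "x \<in> carrier g \<Longrightarrow> y \<in> carrier g \<Longrightarrow> f (x \<oplus>\<^bsub>g\<^esub> y) = f x \<oplus>\<^bsub>A\<^esub> f y"
  using F unfolding cmor_def by simp
lemma f_hom: "x \<in> hom g n \<Longrightarrow> f x \<in> hom A n"
  using F unfolding cmor_def by simp
lemma f_pd: "x \<in> carrier g \<Longrightarrow> f (pd g x) = pd A (f x)"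
  using F unfolding cmor_def by simp
lemma f_curv: "f (curv g) = curv A"
  using F unfolding cmor_def by simp

lemma f_zero: "f \<zero>\<^bsub>g\<^esub> = \<zero>\<^bsub>A\<^esub>"
proof -
  interpret G: abelian_group g by (rule cl_ag[OF g])
  have "f \<zero>\<^bsub>g\<^esub> \<oplus>\<^bsub>A\<^esub> f \<zero>\<^bsub>g\<^esub> = f \<zero>\<^bsub>g\<^esub>" using f_add[of "\<zero>\<^bsub>g\<^esub>" "\<zero>\<^bsub>g\<^esub>"] by simp
  then show ?thesis by (rule ag_idem_zero[OF ca_ag[OF CA] f_car[OF G.zero_closed]])
qed

lemma pd_zero: "pd A \<zero>\<^bsub>A\<^esub> = \<zero>\<^bsub>A\<^esub>"
proof -
  have "pd A \<zero>\<^bsub>A\<^esub> \<oplus>\<^bsub>A\<^esub> pd A \<zero>\<^bsub>A\<^esub> = pd A \<zero>\<^bsub>A\<^esub>" using ca_pd_add[OF CA, of "\<zero>\<^bsub>A\<^esub>" "\<zero>\<^bsub>A\<^esub>"] by simp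
  then show ?thesis by (rule ag_idem_zero[OF ca_ag[OF CA] ca_pd_closed[OF CA M.zero_closed]])
qed

lemma smult_one'[simp]: "x \<in> carrier A \<Longrightarrow> smult A 1 x = x"
  using M.smult_one[of x] by simp

lemma smult_mult: "x \<in> carrier A \<Longrightarrow> smult A (a * b) x = smult A a (smult A b x)"
  using M.smult_assoc1[of a b x] by simp

lemma evw_cons: "v \<noteq> [] \<Longrightarrow> evw A f (x # v) = f x \<otimes>\<^bsub>A\<^esub> evw A f v"
  by (cases v) auto

lemma evw_car: "set w \<subseteq> Hg g \<Longrightarrow> evw A f w \<in> carrier A"
proof (induction w)
  case Nil
  then show ?case by simp
next
  case (Cons x w)
  then show ?case by (cases "w = []") (auto simp: evw_cons f_car Hg_car[OF g] ca_mult_closed[OF CA])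
qed

lemma evt_car: "valid g r \<Longrightarrow> evt A f r \<in> carrier A"
  by (induction r) (auto simp: evw_car)

lemma evw_app: "v \<noteq> [] \<Longrightarrow> w \<noteq> [] \<Longrightarrow> set v \<subseteq> Hg g \<Longrightarrow> set w \<subseteq> Hg g \<Longrightarrow>
   evw A f (v @ w) = evw A f v \<otimes>\<^bsub>A\<^esub> evw A f w"
proof (induction v)
  case Nil
  then show ?case by simp
next
  case (Cons x v)
  show ?case
  proof (cases "v = []")
    case True
    then show ?thesis using Cons.prems evw_cons by simp
  next
    case False
    have "evw A f ((x # v) @ w) = f x \<otimes>\<^bsub>A\<^esub> evw A f (v @ w)" using False evw_cons by simp
    also have "\<dots> = f x \<otimes>\<^bsub>A\<^esub> (evw A f v \<otimes>\<^bsub>A\<^esub> evw A f w)" using Cons False by simp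
    also have "\<dots> = (f x \<otimes>\<^bsub>A\<^esub> evw A f v) \<otimes>\<^bsub>A\<^esub> evw A f w"
      using Cons.prems False by (simp add: ca_assoc[OF CA] f_car Hg_car[OF g] evw_car)
    also have "\<dots> = evw A f (x # v) \<otimes>\<^bsub>A\<^esub> evw A f w" using False evw_cons by simp
    finally show ?thesis .
  qed
qed

lemma evt_app: "valid g r \<Longrightarrow> valid g s \<Longrightarrow> evt A f (r @ s) = evt A f r \<oplus>\<^bsub>A\<^esub> evt A f s"
  by (induction r) (auto simp: evt_car evw_car M.a_assoc)

lemma evt_rsm: "valid g r \<Longrightarrow> evt A f (rsm c r) = smult A c (evt A f r)"
  by (induction r) (auto simp: evt_car evw_car M.smult_r_distr smult_mult)

lemma evt_mapw: "w \<noteq> [] \<Longrightarrow> set w \<subseteq> Hg g \<Longrightarrow> valid g s \<Longrightarrow>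
  evt A f (map (\<lambda>q. (c * fst q, w @ snd q)) s) = smult A c (evw A f w \<otimes>\<^bsub>A\<^esub> evt A f s)"
proof (induction s)
  case Nil
  then show ?case using ca_mult_zero_r[OF CA evw_car] by simp
next
  case (Cons q s)
  have W: "evw A f w \<in> carrier A" using Cons.prems evw_car by blast
  have V: "evw A f (snd q) \<in> carrier A" using Cons.prems evw_car by simp
  have S: "evt A f s \<in> carrier A" using Cons.prems evt_car by simp
  have "evt A f (map (\<lambda>q. (c * fst q, w @ snd q)) (q # s)) =
     smult A (c * fst q) (evw A f w \<otimes>\<^bsub>A\<^esub> evw A f (snd q)) \<oplus>\<^bsub>A\<^esub> smult A c (evw A f w \<otimes>\<^bsub>A\<^esub> evt A f s)"
    using Cons by (simp add: evw_app)
  also have "\<dots> = smult A c (evw A f w \<otimes>\<^bsub>A\<^esub> (smult A (fst q) (evw A f (snd q)) \<oplus>\<^bsub>A\<^esub> evt A f s))"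
    using W V S by (simp add: ca_r_distr[OF CA] ca_smult_r[OF CA] ca_mult_closed[OF CA] smult_mult M.smult_r_distr)
  finally show ?case by simp
qed

lemma evt_mapx: "x \<in> Hg g \<Longrightarrow> valid g s \<Longrightarrow>
  evt A f (map (\<lambda>q. (c * fst q, x # snd q)) s) = smult A c (f x \<otimes>\<^bsub>A\<^esub> evt A f s)"
  using evt_mapw[of "[x]" s c] by simp

lemma evt_rmul: "valid g r \<Longrightarrow> valid g s \<Longrightarrow> evt A f (rmul r s) = evt A f r \<otimes>\<^bsub>A\<^esub> evt A f s"
proof (induction r)
  case Nil
  then show ?case using ca_mult_zero_l[OF CA evt_car] by simp
next
  case (Cons p r)
  have W: "evw A f (snd p) \<in> carrier A" using Cons.prems evw_car by simp
  have R: "evt A f r \<in> carrier A" using Cons.prems evt_car by simp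
  have S: "evt A f s \<in> carrier A" using Cons.prems evt_car by simp
  have "evt A f (rmul (p # r) s) = smult A (fst p) (evw A f (snd p) \<otimes>\<^bsub>A\<^esub> evt A f s) \<oplus>\<^bsub>A\<^esub> evt A f r \<otimes>\<^bsub>A\<^esub> evt A f s"
  proof -
    have v1: "valid g (map (\<lambda>q. (fst p * fst q, snd p @ snd q)) s)"
      using Cons.prems valid_map_app[OF g] by simp
    have v2: "valid g (rmul r s)" using Cons.prems valid_rmul[OF g] by simp
    show ?thesis using evt_app[OF v1 v2] Cons evt_mapw by simp
  qed
  also have "\<dots> = evt A f (p # r) \<otimes>\<^bsub>A\<^esub> evt A f s"
    using W R S by (simp add: ca_l_distr[OF CA] ca_smult_l[OF CA])
  finally show ?case .
qed

lemma evt_wpd: "w \<noteq> [] \<Longrightarrow> set w \<subseteq> Hg g \<Longrightarrow> evt A f (wpd g w) = pd A (evw A f w)"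
proof (induction w)
  case Nil
  then show ?case by simp
next
  case (Cons x w)
  have xH: "x \<in> Hg g" using Cons.prems by simp
  have xc: "x \<in> carrier g" using Hg_car[OF g xH] .
  show ?case
  proof (cases w)
    case Nil
    then show ?thesis using xc f_pd f_car[OF cl_pd_closed[OF g xc]] by simp
  next
    case (Cons y w')
    have wH: "set w \<subseteq> Hg g" using \<open>set (x # w) \<subseteq> Hg g\<close> by simp
    have IH: "evt A f (wpd g w) = pd A (evw A f w)" using Cons.IH wH Cons by simp
    have vw: "valid g (wpd g w)" using valid_wpd[OF g wH] .
    have W: "evw A f w \<in> carrier A" using evw_car[OF wH] .
    have fx: "f x \<in> hom A (dg g x)" using f_hom Hg_hom[OF g xH] by blast
    have fxc: "f x \<in> carrier A" using f_car xc by blast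
    have "evt A f (wpd g (x # w)) = smult A 1 (f (pd g x) \<otimes>\<^bsub>A\<^esub> evw A f w) \<oplus>\<^bsub>A\<^esub>
        smult A (ksign (dg g x)) (f x \<otimes>\<^bsub>A\<^esub> evt A f (wpd g w))"
      using Cons evt_mapx[OF xH vw] by simp
    also have "\<dots> = (pd A (f x) \<otimes>\<^bsub>A\<^esub> evw A f w) \<oplus>\<^bsub>A\<^esub>
        smult A (ksign (dg g x)) (f x \<otimes>\<^bsub>A\<^esub> pd A (evw A f w))"
      using IH f_pd[OF xc] W fxc M.smult_one by (simp add: ca_mult_closed[OF CA] ca_pd_closed[OF CA])
    also have "\<dots> = pd A (f x \<otimes>\<^bsub>A\<^esub> evw A f w)"
      using ca_deriv[OF CA fx W] by simp
    also have "\<dots> = pd A (evw A f (x # w))" using Cons evw_cons by simp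
    finally show ?thesis .
  qed
qed

lemma evt_rpd: "valid g r \<Longrightarrow> evt A f (rpd g r) = pd A (evt A f r)"
proof (induction r)
  case Nil
  then show ?case using pd_zero by simp
next
  case (Cons p r)
  have W: "evw A f (snd p) \<in> carrier A" using Cons.prems evw_car by simp
  have R: "evt A f r \<in> carrier A" using Cons.prems evt_car by simp
  have vw: "valid g (wpd g (snd p))" using Cons.prems valid_wpd[OF g] by simp
  have "evt A f (rpd g (p # r)) = smult A (fst p) (pd A (evw A f (snd p))) \<oplus>\<^bsub>A\<^esub> pd A (evt A f r)"
  proof -
    have v2: "valid g (rpd g r)" using Cons.prems valid_rpd[OF g] by simp
    have v1: "valid g (rsm (fst p) (wpd g (snd p)))" using vw valid_rsm[OF g] by simp
    show ?thesis using evt_app[OF v1 v2] evt_rsm[OF vw] Cons evt_wpd by simp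
  qed
  also have "\<dots> = pd A (evt A f (p # r))"
    using W R by (simp add: ca_pd_add[OF CA] ca_pd_smult[OF CA])
  finally show ?case .
qed

lemma evw_hom: "w \<noteq> [] \<Longrightarrow> set w \<subseteq> Hg g \<Longrightarrow> evw A f w \<in> hom A (wdeg g w)"
proof (induction w)
  case Nil
  then show ?case by simp
next
  case (Cons x w)
  have xH: "x \<in> Hg g" using Cons.prems by simp
  have fx: "f x \<in> hom A (dg g x)" using f_hom Hg_hom[OF g xH] by blast
  show ?case
  proof (cases "w = []")
    case True
    then show ?thesis using fx by simp
  next
    case False
    then show ?thesis using Cons evw_cons ca_mult_hom[OF CA fx] by simp
  qed
qed

lemma evt_proj_hom: "valid g r \<Longrightarrow> evt A f (proj g n r) \<in> hom A n"
  by (induction r) (auto simp: ca_hom_zero[OF CA] ca_hom_add[OF CA] ca_hom_smult[OF CA] evw_hom)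

lemma evt_proj_sum: "valid g r \<Longrightarrow> finite D \<Longrightarrow> (\<lambda>p. wdeg g (snd p)) ` set r \<subseteq> D \<Longrightarrow>
  evt A f r = finsum A (\<lambda>n. evt A f (proj g n r)) D"
proof (induction r)
  case Nil
  then show ?case by simp
next
  case (Cons p r)
  have W: "evw A f (snd p) \<in> carrier A" using Cons.prems evw_car by simp
  have pc: "(\<lambda>n. evt A f (proj g n r)) \<in> D \<rightarrow> carrier A"
    using Cons.prems evt_car valid_proj[OF g] by simp
  define t where "t = smult A (fst p) (evw A f (snd p))"
  have tc: "t \<in> carrier A" unfolding t_def using W by simp
  have dD: "wdeg g (snd p) \<in> D" using Cons.prems by simp
  have "finsum A (\<lambda>n. evt A f (proj g n (p # r))) D =
      finsum A (\<lambda>n. (if wdeg g (snd p) = n then t else \<zero>\<^bsub>A\<^esub>) \<oplus>\<^bsub>A\<^esub> evt A f (proj g n r)) D"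
  proof (rule M.finsum_cong')
    show "D = D" ..
    show "(\<lambda>n. (if wdeg g (snd p) = n then t else \<zero>\<^bsub>A\<^esub>) \<oplus>\<^bsub>A\<^esub> evt A f (proj g n r)) \<in> D \<rightarrow> carrier A"
      using pc tc by auto
    fix n assume "n \<in> D"
    show "evt A f (proj g n (p # r)) = (if wdeg g (snd p) = n then t else \<zero>\<^bsub>A\<^esub>) \<oplus>\<^bsub>A\<^esub> evt A f (proj g n r)"
      using Cons.prems evt_car valid_proj[OF g] by (simp add: t_def)
  qed
  also have "\<dots> = finsum A (\<lambda>n. if wdeg g (snd p) = n then t else \<zero>\<^bsub>A\<^esub>) D \<oplus>\<^bsub>A\<^esub> finsum A (\<lambda>n. evt A f (proj g n r)) D"
    by (rule M.finsum_addf) (use pc tc in auto)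
  also have "finsum A (\<lambda>n. if wdeg g (snd p) = n then t else \<zero>\<^bsub>A\<^esub>) D = t"
    using M.finsum_singleton[OF dD \<open>finite D\<close>, of "\<lambda>_. t"] tc by simp
  also have "finsum A (\<lambda>n. evt A f (proj g n r)) D = evt A f r"
    using Cons by simp
  finally show ?case by (simp add: t_def)
qed

lemma comps_evt: "valid g r \<Longrightarrow> comps A (evt A f r) n = evt A f (proj g n r)"
proof -
  assume v: "valid g r"
  have "comps A (evt A f r) = (\<lambda>n. evt A f (proj g n r))"
  proof (rule comps_unique'[OF ca_gm[OF CA]])
    show "finite ((\<lambda>p. wdeg g (snd p)) ` set r)" by simp
    show "\<And>n. n \<notin> (\<lambda>p. wdeg g (snd p)) ` set r \<Longrightarrow> evt A f (proj g n r) = \<zero>\<^bsub>A\<^esub>"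
    proof -
      fix n assume "n \<notin> (\<lambda>p. wdeg g (snd p)) ` set r"
      then have "proj g n r = []" unfolding proj_def by (auto simp: filter_empty_conv)
      then show "evt A f (proj g n r) = \<zero>\<^bsub>A\<^esub>" by simp
    qed
    show "\<And>n. evt A f (proj g n r) \<in> hom A n" using evt_proj_hom[OF v] .
    show "evt A f r = finsum A (\<lambda>n. evt A f (proj g n r)) ((\<lambda>p. wdeg g (snd p)) ` set r)"
      by (rule evt_proj_sum[OF v]) auto
  qed
  then show ?thesis by simp
qed

lemma evt_map_distinct: "distinct ns \<Longrightarrow> (\<And>n. h n \<in> Hg g) \<Longrightarrow>
  evt A f (map (\<lambda>n. (1, [h n])) ns) = finsum A (\<lambda>n. f (h n)) (set ns)"
proof (induction ns)
  case Nil
  then show ?case by simp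
next
  case (Cons a ns)
  have hc: "\<And>n. f (h n) \<in> carrier A" using Cons.prems Hg_car[OF g] f_car by blast
  have "finsum A (\<lambda>n. f (h n)) (insert a (set ns)) = f (h a) \<oplus>\<^bsub>A\<^esub> finsum A (\<lambda>n. f (h n)) (set ns)"
    by (rule M.finsum_insert) (use Cons.prems hc in auto)
  then show ?case using Cons hc by simp
qed

lemma evt_lift: "x \<in> carrier g \<Longrightarrow> evt A f (lift g x) = f x"
proof -
  assume x: "x \<in> carrier g"
  have gg: "graded_module g" using cl_gm[OF g] .
  note cp = comps_props[OF gg x]
  have fin: "finite (degs g x)" using cp(1) unfolding degs_def .
  have hH: "\<And>n. comps g x n \<in> Hg g" using cp(2) unfolding Hg_def by blast
  have "evt A f (lift g x) = finsum A (\<lambda>n. f (comps g x n)) (degs g x)"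
    unfolding lift_def using evt_map_distinct[OF _ hH, of "sorted_list_of_set (degs g x)"] fin by simp
  also have "\<dots> = f (finsum g (comps g x) (degs g x))"
  proof (rule finsum_hom[symmetric, OF abelian_group.axioms(1)[OF cl_ag[OF g]] M.abelian_monoid_axioms])
    show "\<And>x. x \<in> carrier g \<Longrightarrow> f x \<in> carrier A" by (rule f_car)
    show "\<And>x y. x \<in> carrier g \<Longrightarrow> y \<in> carrier g \<Longrightarrow> f (x \<oplus>\<^bsub>g\<^esub> y) = f x \<oplus>\<^bsub>A\<^esub> f y" by (rule f_add)
    show "f \<zero>\<^bsub>g\<^esub> = \<zero>\<^bsub>A\<^esub>" by (rule f_zero)
    show "finite (degs g x)" by (rule fin)
    show "comps g x \<in> degs g x \<rightarrow> carrier g" using hH Hg_car[OF g] by blast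
  qed
  also have "\<dots> = f x" using cp(3) unfolding degs_def by simp
  finally show ?thesis .
qed

lemma evt_curv: "evt A f [(1, [curv g])] = curv A"
  using f_curv ca_curv_car[OF CA] by simp

end



section \<open>The universal enveloping algebra as a term model\<close>

definition Mods :: "('k::field_char_0, 'a) cstruct \<Rightarrow>
   (('k, ('k, 'a) uea_carrier) cstruct \<times> ('a \<Rightarrow> ('k, 'a) uea_carrier)) set" where
  "Mods g = {i. curved_assoc (fst i) \<and> cmor g (Skew (fst i)) (snd i)}"

definition req :: "('k::field_char_0, 'a) cstruct \<Rightarrow> ('k, 'a) uea_carrier \<Rightarrow> ('k, 'a) uea_carrier \<Rightarrow> bool" where
  "req g r s \<longleftrightarrow> (\<forall>i\<in>Mods g. evt (fst i) (snd i) r = evt (fst i) (snd i) s)"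

definition canon :: "('k::field_char_0, 'a) cstruct \<Rightarrow> ('k, 'a) uea_carrier \<Rightarrow> ('k, 'a) uea_carrier" where
  "canon g r = (SOME s. valid g s \<and> req g s r)"

definition Ucar :: "('k::field_char_0, 'a) cstruct \<Rightarrow> ('k, 'a) uea_carrier set" where
  "Ucar g = canon g ` {r. valid g r}"

definition UU :: "('k::field_char_0, 'a) cstruct \<Rightarrow> ('k, ('k, 'a) uea_carrier) cstruct" where
  "UU g = \<lparr>carrier = Ucar g, mult = \<lambda>x y. canon g (rmul x y), one = canon g [], zero = canon g [],
     add = \<lambda>x y. canon g (x @ y), smult = \<lambda>c x. canon g (rsm c x),
     hom = \<lambda>n. {u \<in> Ucar g. \<forall>i\<in>Mods g. evt (fst i) (snd i) u \<in> hom (fst i) n},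
     pd = \<lambda>x. canon g (rpd g x), curv = canon g [(1, [curv g])]\<rparr>"

definition etaU :: "('k::field_char_0, 'a) cstruct \<Rightarrow> 'a \<Rightarrow> ('k, 'a) uea_carrier" where
  "etaU g x = canon g (lift g x)"

lemma UU_simps[simp]:
  "carrier (UU g) = Ucar g" "mult (UU g) x y = canon g (rmul x y)" "zero (UU g) = canon g []"
  "add (UU g) x y = canon g (x @ y)" "smult (UU g) c x = canon g (rsm c x)"
  "hom (UU g) n = {u \<in> Ucar g. \<forall>i\<in>Mods g. evt (fst i) (snd i) u \<in> hom (fst i) n}"
  "pd (UU g) x = canon g (rpd g x)" "curv (UU g) = canon g [(1, [curv g])]"
  by (simp_all add: UU_def)

context
  fixes g :: "('k::field_char_0, 'a) cstruct"
  assumes g: "curved_lie g"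
begin

lemma Mods_ev: "i \<in> Mods g \<Longrightarrow> evctx g (fst i) (snd i)"
  unfolding Mods_def by (simp add: evctx_def g)

lemma canon_props: "valid g r \<Longrightarrow> valid g (canon g r) \<and> req g (canon g r) r"
  unfolding canon_def by (rule someI[of _ r]) (simp add: req_def)

lemma canon_eq: "req g r s \<Longrightarrow> canon g r = canon g s"
proof -
  assume rs: "req g r s"
  have "(\<lambda>t. valid g t \<and> req g t r) = (\<lambda>t. valid g t \<and> req g t s)"
    using rs unfolding req_def by auto
  then show ?thesis unfolding canon_def by simp
qed

lemma Ucar_valid: "u \<in> Ucar g \<Longrightarrow> valid g u"
  unfolding Ucar_def using canon_props by blast

lemma canon_in: "valid g r \<Longrightarrow> canon g r \<in> Ucar g"
  unfolding Ucar_def by blast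

lemma canon_id: "u \<in> Ucar g \<Longrightarrow> canon g u = u"
proof -
  assume "u \<in> Ucar g"
  then obtain r where r: "valid g r" "u = canon g r" unfolding Ucar_def by blast
  have "req g (canon g r) r" using canon_props[OF r(1)] by blast
  then show ?thesis using r(2) canon_eq by simp
qed

lemma E_canon: "valid g r \<Longrightarrow> i \<in> Mods g \<Longrightarrow> evt (fst i) (snd i) (canon g r) = evt (fst i) (snd i) r"
  using canon_props unfolding req_def by blast

lemma jfam_UU: "jfam (UU g) (Mods g) fst (\<lambda>i. evt (fst i) (snd i))"
proof
  fix i assume i: "i \<in> Mods g"
  interpret ev: evctx g "fst i" "snd i" using Mods_ev[OF i] .
  show "curved_assoc (fst i)" using i unfolding Mods_def by simp
  show "\<And>u. u \<in> carrier (UU g) \<Longrightarrow> evt (fst i) (snd i) u \<in> carrier (fst i)"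
    using ev.evt_car Ucar_valid by simp
  show "evt (fst i) (snd i) \<zero>\<^bsub>UU g\<^esub> = \<zero>\<^bsub>fst i\<^esub>" using E_canon[OF _ i] by simp
  show "evt (fst i) (snd i) (curv (UU g)) = curv (fst i)"
    using E_canon[OF valid_curv[OF g] i] ev.evt_curv by simp
  fix u v assume u: "u \<in> carrier (UU g)" and v: "v \<in> carrier (UU g)"
  have vu: "valid g u" and vv: "valid g v" using u v Ucar_valid by auto
  show "evt (fst i) (snd i) (u \<oplus>\<^bsub>UU g\<^esub> v) = evt (fst i) (snd i) u \<oplus>\<^bsub>fst i\<^esub> evt (fst i) (snd i) v"
    using E_canon[OF _ i] vu vv ev.evt_app by simp
  show "evt (fst i) (snd i) (u \<otimes>\<^bsub>UU g\<^esub> v) = evt (fst i) (snd i) u \<otimes>\<^bsub>fst i\<^esub> evt (fst i) (snd i) v"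
    using E_canon[OF _ i] vu vv ev.evt_rmul valid_rmul[OF g] by simp
  show "evt (fst i) (snd i) (pd (UU g) u) = pd (fst i) (evt (fst i) (snd i) u)"
    using E_canon[OF _ i] vu ev.evt_rpd valid_rpd[OF g] by simp
  fix c
  show "evt (fst i) (snd i) (smult (UU g) c u) = smult (fst i) c (evt (fst i) (snd i) u)"
    using E_canon[OF _ i] vu ev.evt_rsm valid_rsm[OF g] by simp
next
  fix u v assume u: "u \<in> carrier (UU g)" and v: "v \<in> carrier (UU g)"
    and e: "\<And>i. i \<in> Mods g \<Longrightarrow> evt (fst i) (snd i) u = evt (fst i) (snd i) v"
  have "req g u v" unfolding req_def using e by blast
  then show "u = v" using canon_eq canon_id u v by (metis UU_simps(1))
next
  fix u v assume u: "u \<in> carrier (UU g)" and v: "v \<in> carrier (UU g)"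
  have vu: "valid g u" and vv: "valid g v" using u v Ucar_valid by auto
  show "u \<oplus>\<^bsub>UU g\<^esub> v \<in> carrier (UU g)" using vu vv canon_in by simp
  show "u \<otimes>\<^bsub>UU g\<^esub> v \<in> carrier (UU g)" using vu vv canon_in valid_rmul[OF g] by simp
next
  show "\<zero>\<^bsub>UU g\<^esub> \<in> carrier (UU g)" using canon_in by simp
  show "curv (UU g) \<in> carrier (UU g)" using canon_in valid_curv[OF g] by simp
next
  fix c u assume u: "u \<in> carrier (UU g)"
  show "smult (UU g) c u \<in> carrier (UU g)" using u Ucar_valid canon_in valid_rsm[OF g] by simp
next
  fix u assume u: "u \<in> carrier (UU g)"
  show "pd (UU g) u \<in> carrier (UU g)" using u Ucar_valid canon_in valid_rpd[OF g] by simp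
next
  fix n show "hom (UU g) n = {u \<in> carrier (UU g). \<forall>i\<in>Mods g. evt (fst i) (snd i) u \<in> hom (fst i) n}"
    by simp
next
  fix u n assume u: "u \<in> carrier (UU g)"
  have vu: "valid g u" using u Ucar_valid by simp
  show "\<exists>v\<in>carrier (UU g). \<forall>i\<in>Mods g. evt (fst i) (snd i) v = comps (fst i) (evt (fst i) (snd i) u) n"
  proof (rule bexI[of _ "canon g (proj g n u)"])
    show "canon g (proj g n u) \<in> carrier (UU g)" using canon_in valid_proj[OF g vu] by simp
    show "\<forall>i\<in>Mods g. evt (fst i) (snd i) (canon g (proj g n u)) = comps (fst i) (evt (fst i) (snd i) u) n"
      using E_canon[OF valid_proj[OF g vu]] evctx.comps_evt[OF Mods_ev vu] by simp
  qed
next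
  fix u assume u: "u \<in> carrier (UU g)"
  have vu: "valid g u" using u Ucar_valid by simp
  show "\<exists>D. finite D \<and> (\<forall>n. n \<notin> D \<longrightarrow> (\<forall>i\<in>Mods g. comps (fst i) (evt (fst i) (snd i) u) n = \<zero>\<^bsub>fst i\<^esub>))"
  proof (intro exI conjI allI impI ballI)
    show "finite ((\<lambda>p. wdeg g (snd p)) ` set u)" by simp
    fix n i assume n: "n \<notin> (\<lambda>p. wdeg g (snd p)) ` set u" and i: "i \<in> Mods g"
    have "proj g n u = []" using n unfolding proj_def by (auto simp: filter_empty_conv)
    then show "comps (fst i) (evt (fst i) (snd i) u) n = \<zero>\<^bsub>fst i\<^esub>"
      using evctx.comps_evt[OF Mods_ev[OF i] vu] by simp
  qed
qed

lemma ca_UU: "curved_assoc (UU g)"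
  using jfam.ca_S[OF jfam_UU] .

lemma etaU_car: "x \<in> carrier g \<Longrightarrow> etaU g x \<in> Ucar g"
  unfolding etaU_def using canon_in valid_lift[OF g] by blast

lemma E_etaU: "i \<in> Mods g \<Longrightarrow> x \<in> carrier g \<Longrightarrow> evt (fst i) (snd i) (etaU g x) = snd i x"
  unfolding etaU_def using E_canon valid_lift[OF g] evctx.evt_lift[OF Mods_ev] by simp

lemma cmor_etaU: "cmor g (Skew (UU g)) (etaU g)"
proof (rule jfam.eta_cmor[OF jfam_UU g])
  show "\<And>x. x \<in> carrier g \<Longrightarrow> etaU g x \<in> carrier (UU g)" using etaU_car by simp
  show "\<And>i x. i \<in> Mods g \<Longrightarrow> x \<in> carrier g \<Longrightarrow> evt (fst i) (snd i) (etaU g x) = snd i x"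
    by (rule E_etaU)
  show "\<And>i. i \<in> Mods g \<Longrightarrow> cmor g (Skew (fst i)) (snd i)" unfolding Mods_def by simp
qed

end



lemma cmor_zero:
  assumes "abelian_group M" "abelian_group N" "cmor M N k"
  shows "k \<zero>\<^bsub>M\<^esub> = \<zero>\<^bsub>N\<^esub>"
proof -
  interpret M: abelian_group M by fact
  have kc: "k \<zero>\<^bsub>M\<^esub> \<in> carrier N" using assms(3) unfolding cmor_def by simp
  have "k (\<zero>\<^bsub>M\<^esub> \<oplus>\<^bsub>M\<^esub> \<zero>\<^bsub>M\<^esub>) = k \<zero>\<^bsub>M\<^esub> \<oplus>\<^bsub>N\<^esub> k \<zero>\<^bsub>M\<^esub>"
    using assms(3) M.zero_closed unfolding cmor_def by blast
  moreover have "\<zero>\<^bsub>M\<^esub> \<oplus>\<^bsub>M\<^esub> \<zero>\<^bsub>M\<^esub> = \<zero>\<^bsub>M\<^esub>" by simp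
  ultimately have "k \<zero>\<^bsub>M\<^esub> \<oplus>\<^bsub>N\<^esub> k \<zero>\<^bsub>M\<^esub> = k \<zero>\<^bsub>M\<^esub>" by simp
  then show ?thesis by (rule ag_idem_zero[OF assms(2) kc])
qed

lemma cmor_comp: "cmor M N f1 \<Longrightarrow> cmor N P f2 \<Longrightarrow> cmor M P (\<lambda>x. f2 (f1 x))"
  unfolding cmor_def by auto

lemma cmor_id: "cmor M M (\<lambda>x. x)"
  unfolding cmor_def by auto

lemma cmor_evt:
  assumes ev: "evctx g B f1" and C: "curved_assoc C" and j: "cmor B C j"
    and jf: "\<And>x. x \<in> Hg g \<Longrightarrow> j (f1 x) = f2 x"
  shows "valid g r \<Longrightarrow> j (evt B f1 r) = evt C f2 r"
proof -
  interpret ev: evctx g B f1 by fact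
  have gg: "curved_lie g" using ev.g .
  have j0: "j \<zero>\<^bsub>B\<^esub> = \<zero>\<^bsub>C\<^esub>" using cmor_zero[OF ca_ag[OF ev.CA] ca_ag[OF C] j] .
  have jadd: "\<And>x y. x \<in> carrier B \<Longrightarrow> y \<in> carrier B \<Longrightarrow> j (x \<oplus>\<^bsub>B\<^esub> y) = j x \<oplus>\<^bsub>C\<^esub> j y"
    and jsm: "\<And>c x. x \<in> carrier B \<Longrightarrow> j (smult B c x) = smult C c (j x)"
    and jmul: "\<And>x y. x \<in> carrier B \<Longrightarrow> y \<in> carrier B \<Longrightarrow> j (x \<otimes>\<^bsub>B\<^esub> y) = j x \<otimes>\<^bsub>C\<^esub> j y"
    using j unfolding cmor_def by simp_all
  have w: "set w \<subseteq> Hg g \<Longrightarrow> j (evw B f1 w) = evw C f2 w" for w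
  proof (induction w)
    case Nil
    then show ?case using j0 by simp
  next
    case (Cons x w)
    then show ?case
    proof (cases "w = []")
      case True
      then show ?thesis using Cons jf by simp
    next
      case False
      then obtain y w' where w: "w = y # w'" by (cases w) auto
      have "j (evw B f1 (x # w)) = j (f1 x \<otimes>\<^bsub>B\<^esub> evw B f1 w)" using w by simp
      also have "\<dots> = j (f1 x) \<otimes>\<^bsub>C\<^esub> j (evw B f1 w)"
        using Cons.prems by (intro jmul) (auto simp: ev.f_car Hg_car[OF gg] ev.evw_car)
      finally show ?thesis using Cons jf w by simp
    qed
  qed
  show "valid g r \<Longrightarrow> j (evt B f1 r) = evt C f2 r"
  proof (induction r)
    case Nil
    then show ?case using j0 by simp
  next
    case (Cons p r)
    have "j (evt B f1 (p # r)) = smult C (fst p) (j (evw B f1 (snd p))) \<oplus>\<^bsub>C\<^esub> j (evt B f1 r)"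
      using Cons.prems by (simp add: jadd jsm ev.evw_car ev.evt_car)
    then show ?case using Cons w by simp
  qed
qed

section \<open>Transport of a generated subalgebra into the term type\<close>

definition tA0 :: "('k::field_char_0, 'a) cstruct \<Rightarrow> ('k, 'c) cstruct \<Rightarrow> ('a \<Rightarrow> 'c) \<Rightarrow> 'c set" where
  "tA0 g A f = evt A f ` {r. valid g r}"

definition tpsi :: "('k::field_char_0, 'a) cstruct \<Rightarrow> ('k, 'c) cstruct \<Rightarrow> ('a \<Rightarrow> 'c) \<Rightarrow> 'c \<Rightarrow> ('k, 'a) uea_carrier" where
  "tpsi g A f a = (SOME r. valid g r \<and> evt A f r = a)"

definition tS :: "('k::field_char_0, 'a) cstruct \<Rightarrow> ('k, 'c) cstruct \<Rightarrow> ('a \<Rightarrow> 'c) \<Rightarrow> ('k, ('k, 'a) uea_carrier) cstruct" where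
  "tS g A f = \<lparr>carrier = tpsi g A f ` tA0 g A f,
     mult = \<lambda>u v. tpsi g A f (evt A f u \<otimes>\<^bsub>A\<^esub> evt A f v), one = tpsi g A f \<zero>\<^bsub>A\<^esub>,
     zero = tpsi g A f \<zero>\<^bsub>A\<^esub>, add = \<lambda>u v. tpsi g A f (evt A f u \<oplus>\<^bsub>A\<^esub> evt A f v),
     smult = \<lambda>c u. tpsi g A f (smult A c (evt A f u)),
     hom = \<lambda>n. {u \<in> tpsi g A f ` tA0 g A f. evt A f u \<in> hom A n},
     pd = \<lambda>u. tpsi g A f (pd A (evt A f u)), curv = tpsi g A f (curv A)\<rparr>"

definition tf :: "('k::field_char_0, 'a) cstruct \<Rightarrow> ('k, 'c) cstruct \<Rightarrow> ('a \<Rightarrow> 'c) \<Rightarrow> 'a \<Rightarrow> ('k, 'a) uea_carrier" where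
  "tf g A f x = tpsi g A f (f x)"

lemma tS_simps[simp]:
  "carrier (tS g A f) = tpsi g A f ` tA0 g A f"
  "mult (tS g A f) u v = tpsi g A f (evt A f u \<otimes>\<^bsub>A\<^esub> evt A f v)"
  "zero (tS g A f) = tpsi g A f \<zero>\<^bsub>A\<^esub>"
  "add (tS g A f) u v = tpsi g A f (evt A f u \<oplus>\<^bsub>A\<^esub> evt A f v)"
  "smult (tS g A f) c u = tpsi g A f (smult A c (evt A f u))"
  "hom (tS g A f) n = {u \<in> tpsi g A f ` tA0 g A f. evt A f u \<in> hom A n}"
  "pd (tS g A f) u = tpsi g A f (pd A (evt A f u))"
  "curv (tS g A f) = tpsi g A f (curv A)"
  by (simp_all add: tS_def)

context evctx
begin

lemma psi_props: "a \<in> tA0 g A f \<Longrightarrow> valid g (tpsi g A f a) \<and> evt A f (tpsi g A f a) = a"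
  unfolding tA0_def tpsi_def by (rule someI_ex) blast

lemma in_A0: "valid g r \<Longrightarrow> evt A f r \<in> tA0 g A f"
  unfolding tA0_def by blast

lemma psi_in: "a \<in> tA0 g A f \<Longrightarrow> tpsi g A f a \<in> carrier (tS g A f)"
  by simp

lemma tcar: "u \<in> carrier (tS g A f) \<Longrightarrow> valid g u \<and> evt A f u \<in> tA0 g A f \<and> tpsi g A f (evt A f u) = u"
proof -
  assume "u \<in> carrier (tS g A f)"
  then obtain a where a: "a \<in> tA0 g A f" "u = tpsi g A f a" by auto
  show ?thesis using psi_props[OF a(1)] a by simp
qed

lemma jfam_tS: "jfam (tS g A f) (UNIV :: unit set) (\<lambda>_. A) (\<lambda>_. evt A f)"
proof
  show "\<And>i. curved_assoc A" by (rule CA)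
  show "\<And>u. u \<in> carrier (tS g A f) \<Longrightarrow> evt A f u \<in> carrier A" using tcar evt_car by blast
  show "\<And>u v. u \<in> carrier (tS g A f) \<Longrightarrow> v \<in> carrier (tS g A f) \<Longrightarrow>
      (\<And>i. i \<in> (UNIV :: unit set) \<Longrightarrow> evt A f u = evt A f v) \<Longrightarrow> u = v"
  proof -
    fix u v assume u: "u \<in> carrier (tS g A f)" and v: "v \<in> carrier (tS g A f)"
      and e: "\<And>i. i \<in> (UNIV :: unit set) \<Longrightarrow> evt A f u = evt A f v"
    have "u = tpsi g A f (evt A f u)" using tcar[OF u] by simp
    also have "\<dots> = tpsi g A f (evt A f v)" using e by simp
    also have "\<dots> = v" using tcar[OF v] by simp
    finally show "u = v" .
  qed
  have z: "\<zero>\<^bsub>A\<^esub> \<in> tA0 g A f" using in_A0[of "[]"] by simp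
  show "\<zero>\<^bsub>tS g A f\<^esub> \<in> carrier (tS g A f)" using z by simp
  show "\<And>i. evt A f \<zero>\<^bsub>tS g A f\<^esub> = \<zero>\<^bsub>A\<^esub>" using psi_props[OF z] by simp
  have cv: "curv A \<in> tA0 g A f" using in_A0[OF valid_curv[OF g]] evt_curv by simp
  show "curv (tS g A f) \<in> carrier (tS g A f)" using cv by simp
  show "\<And>i. evt A f (curv (tS g A f)) = curv A" using psi_props[OF cv] by simp
  fix u v assume u: "u \<in> carrier (tS g A f)" and v: "v \<in> carrier (tS g A f)"
  have vu: "valid g u" and vv: "valid g v" using tcar u v by auto
  have a: "evt A f u \<oplus>\<^bsub>A\<^esub> evt A f v \<in> tA0 g A f" using in_A0[of "u @ v"] vu vv evt_app by simp
  show "u \<oplus>\<^bsub>tS g A f\<^esub> v \<in> carrier (tS g A f)" using a by simp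
  show "\<And>i. evt A f (u \<oplus>\<^bsub>tS g A f\<^esub> v) = evt A f u \<oplus>\<^bsub>A\<^esub> evt A f v" using psi_props[OF a] by simp
  have m: "evt A f u \<otimes>\<^bsub>A\<^esub> evt A f v \<in> tA0 g A f"
    using in_A0[of "rmul u v"] vu vv evt_rmul valid_rmul[OF g] by simp
  show "u \<otimes>\<^bsub>tS g A f\<^esub> v \<in> carrier (tS g A f)" using m by simp
  show "\<And>i. evt A f (u \<otimes>\<^bsub>tS g A f\<^esub> v) = evt A f u \<otimes>\<^bsub>A\<^esub> evt A f v" using psi_props[OF m] by simp
next
  fix c u assume u: "u \<in> carrier (tS g A f)"
  have vu: "valid g u" using tcar u by auto
  have a: "smult A c (evt A f u) \<in> tA0 g A f" using in_A0[of "rsm c u"] vu evt_rsm valid_rsm[OF g] by simp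
  show "smult (tS g A f) c u \<in> carrier (tS g A f)" using a by simp
  show "\<And>i. evt A f (smult (tS g A f) c u) = smult A c (evt A f u)" using psi_props[OF a] by simp
next
  fix u assume u: "u \<in> carrier (tS g A f)"
  have vu: "valid g u" using tcar u by auto
  have a: "pd A (evt A f u) \<in> tA0 g A f" using in_A0[of "rpd g u"] vu evt_rpd valid_rpd[OF g] by simp
  show "pd (tS g A f) u \<in> carrier (tS g A f)" using a by simp
  show "\<And>i. evt A f (pd (tS g A f) u) = pd A (evt A f u)" using psi_props[OF a] by simp
next
  fix n show "hom (tS g A f) n = {u \<in> carrier (tS g A f). \<forall>i\<in>(UNIV :: unit set). evt A f u \<in> hom A n}"
    by simp
next
  fix u n assume u: "u \<in> carrier (tS g A f)"
  have vu: "valid g u" using tcar u by auto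
  have a: "comps A (evt A f u) n \<in> tA0 g A f" using in_A0[OF valid_proj[OF g vu]] comps_evt[OF vu] by simp
  show "\<exists>v\<in>carrier (tS g A f). \<forall>i\<in>(UNIV :: unit set). evt A f v = comps A (evt A f u) n"
    using psi_props[OF a] psi_in[OF a] by blast
next
  fix u assume u: "u \<in> carrier (tS g A f)"
  have vu: "valid g u" using tcar u by auto
  show "\<exists>D. finite D \<and> (\<forall>n. n \<notin> D \<longrightarrow> (\<forall>i\<in>(UNIV :: unit set). comps A (evt A f u) n = \<zero>\<^bsub>A\<^esub>))"
    using comps_props(1)[OF ca_gm[OF CA] evt_car[OF vu]] by blast
qed

lemma fx_A0: "x \<in> carrier g \<Longrightarrow> f x \<in> tA0 g A f"
  using in_A0[OF valid_lift[OF g]] evt_lift by simp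

lemma tS_model: "(tS g A f, tf g A f) \<in> Mods g"
proof -
  have "cmor g (Skew (tS g A f)) (tf g A f)"
  proof (rule jfam.eta_cmor[OF jfam_tS g])
    show "\<And>x. x \<in> carrier g \<Longrightarrow> tf g A f x \<in> carrier (tS g A f)"
      unfolding tf_def using fx_A0 psi_in by blast
    show "\<And>i x. x \<in> carrier g \<Longrightarrow> evt A f (tf g A f x) = f x"
      unfolding tf_def using fx_A0 psi_props by blast
    show "\<And>i. cmor g (Skew A) f" by (rule F)
  qed
  then show ?thesis unfolding Mods_def using jfam.ca_S[OF jfam_tS] by simp
qed

lemma transfer: "valid g r \<Longrightarrow> evt A f r = evt A f (evt (tS g A f) (tf g A f) r)"
proof -
  assume v: "valid g r"
  have ev: "evctx g (tS g A f) (tf g A f)" using Mods_ev[OF g tS_model] by simp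
  have "evt A f (evt (tS g A f) (tf g A f) r) = evt A f r"
  proof (rule cmor_evt[OF ev CA _ _ v])
    show "cmor (tS g A f) A (evt A f)" using jfam.cmor_E[OF jfam_tS] by simp
    show "\<And>x. x \<in> Hg g \<Longrightarrow> evt A f (tf g A f x) = f x"
      unfolding tf_def using fx_A0 psi_props Hg_car[OF g] by blast
  qed
  then show ?thesis by simp
qed

lemma req_tr: "valid g r \<Longrightarrow> valid g s \<Longrightarrow> req g r s \<Longrightarrow> evt A f r = evt A f s"
proof -
  assume r: "valid g r" and s: "valid g s" and rs: "req g r s"
  have "evt (tS g A f) (tf g A f) r = evt (tS g A f) (tf g A f) s"
    using rs tS_model unfolding req_def by force
  then show ?thesis using transfer[OF r] transfer[OF s] by simp
qed

lemma canon_tr: "valid g r \<Longrightarrow> evt A f (canon g r) = evt A f r"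
proof -
  assume r: "valid g r"
  have "valid g (canon g r)" "req g (canon g r) r" using canon_props[OF g r] by simp_all
  then show ?thesis using req_tr r by blast
qed

lemma hom_tr: "u \<in> hom (UU g) n \<Longrightarrow> evt A f u \<in> hom A n"
proof -
  assume u: "u \<in> hom (UU g) n"
  have vu: "valid g u" using u Ucar_valid[OF g] by simp
  have "\<forall>i\<in>Mods g. evt (fst i) (snd i) u \<in> hom (fst i) n" using u by simp
  then have "evt (tS g A f) (tf g A f) u \<in> hom (tS g A f) n" using tS_model by force
  then have "evt A f (evt (tS g A f) (tf g A f) u) \<in> hom A n"
    using jfam.cmor_E[OF jfam_tS] unfolding cmor_def by blast
  then show ?thesis using transfer[OF vu] by simp
qed

end



fun bw :: "('k::field_char_0, 'a) cstruct \<Rightarrow> 'a list \<Rightarrow> ('k, 'a) uea_carrier" where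
  "bw g [] = canon g []"
| "bw g [x] = etaU g x"
| "bw g (x # y # w) = canon g (rmul (etaU g x) (bw g (y # w)))"

fun bt :: "('k::field_char_0, 'a) cstruct \<Rightarrow> ('k, 'a) uea_carrier \<Rightarrow> ('k, 'a) uea_carrier" where
  "bt g [] = canon g []"
| "bt g (p # r) = canon g (canon g (rsm (fst p) (bw g (snd p))) @ bt g r)"

context
  fixes g :: "('k::field_char_0, 'a) cstruct"
  assumes g: "curved_lie g"
begin

lemma bgen:
  assumes C: "curved_assoc C" and k: "cmor (UU g) C k"
    and ke: "\<And>x. x \<in> carrier g \<Longrightarrow> k (etaU g x) = f2 x"
  shows "valid g r \<Longrightarrow> bt g r \<in> Ucar g \<and> k (bt g r) = evt C f2 r"
proof -
  have k0: "k (canon g []) = \<zero>\<^bsub>C\<^esub>"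
    using cmor_zero[OF jfam.ag_S[OF jfam_UU[OF g]] ca_ag[OF C] k] by simp
  have kadd: "\<And>x y. x \<in> Ucar g \<Longrightarrow> y \<in> Ucar g \<Longrightarrow> k (canon g (x @ y)) = k x \<oplus>\<^bsub>C\<^esub> k y"
    and ksm: "\<And>c x. x \<in> Ucar g \<Longrightarrow> k (canon g (rsm c x)) = smult C c (k x)"
    and kmul: "\<And>x y. x \<in> Ucar g \<Longrightarrow> y \<in> Ucar g \<Longrightarrow> k (canon g (rmul x y)) = k x \<otimes>\<^bsub>C\<^esub> k y"
    using k unfolding cmor_def by simp_all
  have e0: "canon g [] \<in> Ucar g" using canon_in[OF g] by simp
  have w: "set w \<subseteq> Hg g \<Longrightarrow> bw g w \<in> Ucar g \<and> k (bw g w) = evw C f2 w" for w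
  proof (induction w)
    case Nil
    then show ?case using e0 k0 by simp
  next
    case (Cons x w)
    have xc: "x \<in> carrier g" using Cons.prems Hg_car[OF g] by simp
    show ?case
    proof (cases "w = []")
      case True
      then show ?thesis using etaU_car[OF g xc] ke[OF xc] by simp
    next
      case False
      then obtain y w' where w: "w = y # w'" by (cases w) auto
      have IH: "bw g w \<in> Ucar g \<and> k (bw g w) = evw C f2 w" using Cons by simp
      have "bw g (x # w) = canon g (rmul (etaU g x) (bw g w))" using w by simp
      moreover have "canon g (rmul (etaU g x) (bw g w)) \<in> Ucar g"
        using canon_in[OF g] valid_rmul[OF g] Ucar_valid[OF g] etaU_car[OF g xc] IH by blast
      moreover have "k (canon g (rmul (etaU g x) (bw g w))) = f2 x \<otimes>\<^bsub>C\<^esub> evw C f2 w"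
        using kmul[OF etaU_car[OF g xc]] IH ke[OF xc] by simp
      ultimately show ?thesis using w by simp
    qed
  qed
  show "valid g r \<Longrightarrow> bt g r \<in> Ucar g \<and> k (bt g r) = evt C f2 r"
  proof (induction r)
    case Nil
    then show ?case using e0 k0 by simp
  next
    case (Cons p r)
    have W: "bw g (snd p) \<in> Ucar g \<and> k (bw g (snd p)) = evw C f2 (snd p)" using w Cons.prems by simp
    have IH: "bt g r \<in> Ucar g \<and> k (bt g r) = evt C f2 r" using Cons by simp
    have s1: "canon g (rsm (fst p) (bw g (snd p))) \<in> Ucar g"
      using canon_in[OF g] valid_rsm[OF g] Ucar_valid[OF g] W by blast
    have "canon g (canon g (rsm (fst p) (bw g (snd p))) @ bt g r) \<in> Ucar g"
      using canon_in[OF g] Ucar_valid[OF g] s1 IH by simp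
    moreover have "k (canon g (canon g (rsm (fst p) (bw g (snd p))) @ bt g r)) = evt C f2 (p # r)"
      using kadd[OF s1] ksm W IH by simp
    ultimately show ?case by simp
  qed
qed

lemma bt_id: "u \<in> Ucar g \<Longrightarrow> bt g u = u"
proof -
  assume u: "u \<in> Ucar g"
  have vu: "valid g u" using Ucar_valid[OF g u] .
  show ?thesis
  proof (rule jfam.inj[OF jfam_UU[OF g]])
    have "bt g u \<in> Ucar g \<and> bt g u = evt (UU g) (etaU g) u"
      by (rule bgen[OF ca_UU[OF g] cmor_id _ vu]) simp
    then have "bt g u \<in> Ucar g" by (rule conjunct1)
    then show "bt g u \<in> carrier (UU g)" by simp
    show "u \<in> carrier (UU g)" using u by simp
    fix i assume i: "i \<in> Mods g"
    have "bt g u \<in> Ucar g \<and> evt (fst i) (snd i) (bt g u) = evt (fst i) (snd i) u"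
    proof (rule bgen[OF _ _ _ vu])
      show "curved_assoc (fst i)" using i unfolding Mods_def by simp
      show "cmor (UU g) (fst i) (evt (fst i) (snd i))" using jfam.cmor_E[OF jfam_UU[OF g] i] .
      show "\<And>x. x \<in> carrier g \<Longrightarrow> evt (fst i) (snd i) (etaU g x) = snd i x" using E_etaU[OF g i] .
    qed
    then show "evt (fst i) (snd i) (bt g u) = evt (fst i) (snd i) u" by simp
  qed
qed

lemma UU_universal: "universal_arrow g (UU g) (etaU g) TYPE('b)"
  unfolding universal_arrow_def
proof (intro conjI allI impI)
  show "curved_assoc (UU g)" by (rule ca_UU[OF g])
  show "cmor g (Skew (UU g)) (etaU g)" by (rule cmor_etaU[OF g])
  fix A :: "('k, 'b) cstruct" and f
  assume Af: "curved_assoc A \<and> cmor g (Skew A) f"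
  interpret ev: evctx g A f using Af g by (simp add: evctx_def)
  have ct: "\<And>r. valid g r \<Longrightarrow> evt A f (canon g r) = evt A f r" by (rule ev.canon_tr)
  have hc: "cmor (UU g) A (evt A f)"
    unfolding cmor_def
  proof (intro conjI ballI allI)
    fix x y assume x: "x \<in> carrier (UU g)" and y: "y \<in> carrier (UU g)"
    have vx: "valid g x" and vy: "valid g y" using x y Ucar_valid[OF g] by auto
    show "evt A f x \<in> carrier A" using ev.evt_car vx .
    show "evt A f (x \<oplus>\<^bsub>UU g\<^esub> y) = evt A f x \<oplus>\<^bsub>A\<^esub> evt A f y"
      using ct vx vy ev.evt_app by simp
    show "evt A f (x \<otimes>\<^bsub>UU g\<^esub> y) = evt A f x \<otimes>\<^bsub>A\<^esub> evt A f y"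
      using ct vx vy ev.evt_rmul valid_rmul[OF g] by simp
    show "evt A f (pd (UU g) x) = pd A (evt A f x)"
      using ct vx ev.evt_rpd valid_rpd[OF g] by simp
  next
    fix c x assume x: "x \<in> carrier (UU g)"
    have vx: "valid g x" using x Ucar_valid[OF g] by auto
    show "evt A f (smult (UU g) c x) = smult A c (evt A f x)"
      using ct vx ev.evt_rsm valid_rsm[OF g] by simp
  next
    fix n x assume "x \<in> hom (UU g) n"
    then show "evt A f x \<in> hom A n" by (rule ev.hom_tr)
  next
    show "evt A f (curv (UU g)) = curv A" using ct valid_curv[OF g] ev.evt_curv by simp
  qed
  have he: "\<forall>x\<in>carrier g. evt A f (etaU g x) = f x"
    unfolding etaU_def using ct valid_lift[OF g] ev.evt_lift by simp
  show "\<exists>h. cmor (UU g) A h \<and> (\<forall>x\<in>carrier g. h (etaU g x) = f x) \<and>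
             (\<forall>h'. cmor (UU g) A h' \<and> (\<forall>x\<in>carrier g. h' (etaU g x) = f x) \<longrightarrow>
                   (\<forall>y\<in>carrier (UU g). h' y = h y))"
  proof (intro exI[of _ "evt A f"] conjI allI impI ballI)
    show "cmor (UU g) A (evt A f)" by (rule hc)
    show "\<And>x. x \<in> carrier g \<Longrightarrow> evt A f (etaU g x) = f x" using he by blast
    fix h' y
    assume h': "cmor (UU g) A h' \<and> (\<forall>x\<in>carrier g. h' (etaU g x) = f x)" and y: "y \<in> carrier (UU g)"
    have vy: "valid g y" using y Ucar_valid[OF g] by simp
    have "bt g y \<in> Ucar g \<and> h' (bt g y) = evt A f y"
      by (rule bgen[OF ev.CA _ _ vy]) (use h' in auto)
    then show "h' y = evt A f y" using bt_id y by simp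
  qed
qed

end

lemma univ_transfer:
  fixes U0 U1 :: "('k::field_char_0, 't) cstruct"
  assumes u0t: "universal_arrow g U0 e0 TYPE('t)"
    and u0b: "universal_arrow g U0 e0 TYPE('b)"
    and u1t: "universal_arrow g U1 e1 TYPE('t)"
  shows "universal_arrow g U1 e1 TYPE('b)"
proof -
  have ca0: "curved_assoc U0" and ce0: "cmor g (Skew U0) e0" using u0t unfolding universal_arrow_def by simp_all
  have ca1: "curved_assoc U1" and ce1: "cmor g (Skew U1) e1" using u1t unfolding universal_arrow_def by simp_all
  have U1t: "\<And>(A :: ('k, 't) cstruct) f. curved_assoc A \<Longrightarrow> cmor g (Skew A) f \<Longrightarrow>
        (\<exists>h. cmor U1 A h \<and> (\<forall>x\<in>carrier g. h (e1 x) = f x) \<and>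
             (\<forall>h'. cmor U1 A h' \<and> (\<forall>x\<in>carrier g. h' (e1 x) = f x) \<longrightarrow>
                   (\<forall>y\<in>carrier U1. h' y = h y)))"
    using u1t unfolding universal_arrow_def by blast
  have U0t: "\<And>(A :: ('k, 't) cstruct) f. curved_assoc A \<Longrightarrow> cmor g (Skew A) f \<Longrightarrow>
        (\<exists>h. cmor U0 A h \<and> (\<forall>x\<in>carrier g. h (e0 x) = f x) \<and>
             (\<forall>h'. cmor U0 A h' \<and> (\<forall>x\<in>carrier g. h' (e0 x) = f x) \<longrightarrow>
                   (\<forall>y\<in>carrier U0. h' y = h y)))"
    using u0t unfolding universal_arrow_def by blast
  have U0b: "\<And>(A :: ('k, 'b) cstruct) f. curved_assoc A \<Longrightarrow> cmor g (Skew A) f \<Longrightarrow>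
        (\<exists>h. cmor U0 A h \<and> (\<forall>x\<in>carrier g. h (e0 x) = f x) \<and>
             (\<forall>h'. cmor U0 A h' \<and> (\<forall>x\<in>carrier g. h' (e0 x) = f x) \<longrightarrow>
                   (\<forall>y\<in>carrier U0. h' y = h y)))"
    using u0b unfolding universal_arrow_def by blast
  obtain phi where phi: "cmor U1 U0 phi" "\<And>x. x \<in> carrier g \<Longrightarrow> phi (e1 x) = e0 x"
    using U1t[OF ca0 ce0] by blast
  obtain psi where psi: "cmor U0 U1 psi" "\<And>x. x \<in> carrier g \<Longrightarrow> psi (e0 x) = e1 x"
    using U0t[OF ca1 ce1] by blast
  obtain h1 where h1: "\<And>h'. cmor U1 U1 h' \<Longrightarrow> (\<forall>x\<in>carrier g. h' (e1 x) = e1 x) \<Longrightarrow>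
        (\<forall>y\<in>carrier U1. h' y = h1 y)"
    using U1t[OF ca1 ce1] by blast
  have pp: "\<And>y. y \<in> carrier U1 \<Longrightarrow> psi (phi y) = y"
  proof -
    fix y assume y: "y \<in> carrier U1"
    have "psi (phi y) = h1 y" using h1[OF cmor_comp[OF phi(1) psi(1)]] phi(2) psi(2) y by simp
    moreover have "y = h1 y" using h1[OF cmor_id] y by simp
    ultimately show "psi (phi y) = y" by simp
  qed
  have phic: "\<And>y. y \<in> carrier U1 \<Longrightarrow> phi y \<in> carrier U0" using phi(1) unfolding cmor_def by simp
  show ?thesis
    unfolding universal_arrow_def
  proof (intro conjI allI impI)
    show "curved_assoc U1" by (rule ca1)
    show "cmor g (Skew U1) e1" by (rule ce1)
    fix A :: "('k, 'b) cstruct" and f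
    assume Af: "curved_assoc A \<and> cmor g (Skew A) f"
    obtain h0 where h0: "cmor U0 A h0" "\<And>x. x \<in> carrier g \<Longrightarrow> h0 (e0 x) = f x"
      "\<And>h'. cmor U0 A h' \<Longrightarrow> (\<forall>x\<in>carrier g. h' (e0 x) = f x) \<Longrightarrow> (\<forall>y\<in>carrier U0. h' y = h0 y)"
      using U0b[of A f] Af by blast
    show "\<exists>h. cmor U1 A h \<and> (\<forall>x\<in>carrier g. h (e1 x) = f x) \<and>
             (\<forall>h'. cmor U1 A h' \<and> (\<forall>x\<in>carrier g. h' (e1 x) = f x) \<longrightarrow>
                   (\<forall>y\<in>carrier U1. h' y = h y))"
    proof (intro exI[of _ "\<lambda>y. h0 (phi y)"] conjI allI impI ballI)
      show "cmor U1 A (\<lambda>y. h0 (phi y))" by (rule cmor_comp[OF phi(1) h0(1)])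
      show "\<And>x. x \<in> carrier g \<Longrightarrow> h0 (phi (e1 x)) = f x" using phi(2) h0(2) by simp
      fix h' y assume h': "cmor U1 A h' \<and> (\<forall>x\<in>carrier g. h' (e1 x) = f x)" and y: "y \<in> carrier U1"
      have "\<forall>z\<in>carrier U0. h' (psi z) = h0 z"
        using h0(3)[OF cmor_comp[OF psi(1)]] h' psi(2) by simp
      then have "h' (psi (phi y)) = h0 (phi y)" using phic[OF y] by blast
      then show "h' y = h0 (phi y)" using pp[OF y] by simp
    qed
  qed
qed

theorem corollary3p12:
  fixes g :: "('k::field_char_0, 'a) cstruct"
  assumes "curved_lie g"
  shows "universal_arrow g (fst (cUEA g)) (snd (cUEA g)) TYPE('b)"
proof -
  have "case cUEA g of (U, eta) \<Rightarrow> universal_arrow g U eta TYPE(('k, 'a) uea_carrier)"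
    unfolding cUEA_def by (rule someI[of _ "(UU g, etaU g)"]) (simp add: UU_universal[OF assms])
  then have c: "universal_arrow g (fst (cUEA g)) (snd (cUEA g)) TYPE(('k, 'a) uea_carrier)"
    by (simp add: split_beta)
  show ?thesis
    by (rule univ_transfer[OF UU_universal[OF assms] UU_universal[OF assms] c])
qed


end
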